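(* Let $G$ be a $2$-connected graph, let $F\subseteq E(G)$ be an inclusion-wise minimal set of edges such that $T=G/F$ is a cactus, let $\mathcal{W}$ be the $T$-witness structure of $G$, and let $f:V(G)\to\{1,2,3\}$ be a coloring compatible with $\mathcal{W}$. Let $Y,Z$ be two distinct monochromatic components of $f$, and let $P=(v_1,\dots,v_\ell)$, $\ell\ge2$, be a connected component of $G-(Y\cup Z)$ that is a maximal cable path in $G$ with $N_G(v_1)\subseteq Y\cup\{v_2\}$ and $N_G(v_\ell)\subseteq Z\cup\{v_{\ell-1}\}$. Then every vertex of $P$ forms a singleton witness set of $\mathcal{W}$, and each of $Y$ and $Z$ contains a big witness set of $\mathcal{W}$.
   Context: A cactus is a connected graph in which every edge lies in at most one cycle. For $F\subseteq E(G)$, $G/F$ is the graph whose vertices correspond to the parts of the partition of $V(G)$ into the vertex sets of connected components of $(V(F),F)$ and singletons $\{v\}$ for $v\notin V(F)$, two parts adjacent iff some edge of $G$ joins them; this partition is the $G/F$-witness structure $\mathcal{W}$, with $W(t)$ the part for $t\in V(G/F)$. A witness set is big if it has at least two vertices, singleton otherwise. A cable path in a graph $H$ is a path $(v_1,\dots,v_q)$ such that $N_H(v_i)=\{v_{i-1},v_{i+1}\}$ for each $2\le i\le q-1$; it is maximal if it is not contained in a longer cable path. A coloring $f:V(G)\to\{1,2,3\}$ is compatible with $\mathcal{W}$ if: (1) every witness set is monochromatic; (2) for every edge $t_xt_y\in E(T)$ with $W(t_x),W(t_y)$ both big, $f(W(t_x))\ne f(W(t_y))$; (3) for every cable path $(t_x,t_1,\dots,t_q,t_y)$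 in $T$ ($q\ge1$) with $W(t_x),W(t_y)$ big and all $W(t_i)$ singleton, $f(W(t_x))\neq f(W(t_1))$ and $f(W(t_y))\ne f(W(t_q))$. A monochromatic component of a coloring is an inclusion-wise maximal set of vertices that all have the same color and induce a connected subgraph. *)

theory Defs
  imports Main "HOL-Library.Sublist"
begin

definition graph :: "'a set \<Rightarrow> 'a set set \<Rightarrow> bool" where
  "graph V E \<longleftrightarrow> finite V \<and> (\<forall>e\<in>E. \<exists>u v. u \<noteq> v \<and> u \<in> V \<and> v \<in> V \<and> e = {u, v})"

definition nbhd :: "'a set set \<Rightarrow> 'a \<Rightarrow> 'a set" where
  "nbhd E v = {u. {u, v} \<in> E}"

definition edge_rel :: "'a set set \<Rightarrow> 'a set \<Rightarrow> ('a \<times> 'a) set" where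
  "edge_rel E S = {(u, v). {u, v} \<in> E \<and> u \<in> S \<and> v \<in> S}"

definition connected_on :: "'a set set \<Rightarrow> 'a set \<Rightarrow> bool" where
  "connected_on E S \<longleftrightarrow> S \<noteq> {} \<and> (\<forall>x\<in>S. \<forall>y\<in>S. (x, y) \<in> (edge_rel E S)\<^sup>*)"

definition two_connected :: "'a set \<Rightarrow> 'a set set \<Rightarrow> bool" where
  "two_connected V E \<longleftrightarrow> graph V E \<and> card V \<ge> 3 \<and> connected_on E V
     \<and> (\<forall>v\<in>V. connected_on E (V - {v}))"

definition is_cycle :: "'a set set \<Rightarrow> 'a list \<Rightarrow> bool" where
  "is_cycle E cs \<longleftrightarrow> length cs \<ge> 3 \<and> distinct cs
     \<and> (\<forall>i<length cs. {cs ! i, cs ! ((i + 1) mod length cs)} \<in> E)"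

definition cycle_edges :: "'a list \<Rightarrow> 'a set set" where
  "cycle_edges cs = {{cs ! i, cs ! ((i + 1) mod length cs)} | i. i < length cs}"

definition cactus :: "'a set \<Rightarrow> 'a set set \<Rightarrow> bool" where
  "cactus V E \<longleftrightarrow> graph V E \<and> connected_on E V \<and>
     (\<forall>e\<in>E. \<forall>c1 c2. is_cycle E c1 \<and> is_cycle E c2 \<and> e \<in> cycle_edges c1 \<and> e \<in> cycle_edges c2
        \<longrightarrow> cycle_edges c1 = cycle_edges c2)"

text \<open>The G/F-witness structure: components of (V(F),F) and singletons of vertices not in V(F).\<close>
definition frel :: "'a set set \<Rightarrow> ('a \<times> 'a) set" where
  "frel F = {(a, b). {a, b} \<in> F}"

definition witness :: "'a set \<Rightarrow> 'a set set \<Rightarrow> 'a set set" where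
  "witness V F = (\<lambda>x. {y \<in> V. (x, y) \<in> (frel F)\<^sup>*}) ` V"

text \<open>Edges of G/F; the vertices of G/F are the witness sets themselves, so W(t) = t.\<close>
definition contr_edges :: "'a set \<Rightarrow> 'a set set \<Rightarrow> 'a set set \<Rightarrow> 'a set set set" where
  "contr_edges V E F = {{A, B} | A B. A \<in> witness V F \<and> B \<in> witness V F \<and> A \<noteq> B
      \<and> (\<exists>a\<in>A. \<exists>b\<in>B. {a, b} \<in> E)}"

definition minimal_cactus_contraction :: "'a set \<Rightarrow> 'a set set \<Rightarrow> 'a set set \<Rightarrow> bool" where
  "minimal_cactus_contraction V E F \<longleftrightarrow> F \<subseteq> E \<and> cactus (witness V F) (contr_edges V E F)
     \<and> (\<forall>F'. F' \<subset> F \<longrightarrow> \<not> cactus (witness V F') (contr_edges V E F'))"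

definition is_path :: "'a set \<Rightarrow> 'a set set \<Rightarrow> 'a list \<Rightarrow> bool" where
  "is_path V E ps \<longleftrightarrow> ps \<noteq> [] \<and> distinct ps \<and> set ps \<subseteq> V
     \<and> (\<forall>i. i + 1 < length ps \<longrightarrow> {ps ! i, ps ! (i + 1)} \<in> E)"

definition cable_path :: "'a set \<Rightarrow> 'a set set \<Rightarrow> 'a list \<Rightarrow> bool" where
  "cable_path V E ps \<longleftrightarrow> is_path V E ps
     \<and> (\<forall>i. 0 < i \<and> i + 1 < length ps \<longrightarrow> nbhd E (ps ! i) = {ps ! (i - 1), ps ! (i + 1)})"

definition max_cable_path :: "'a set \<Rightarrow> 'a set set \<Rightarrow> 'a list \<Rightarrow> bool" where
  "max_cable_path V E ps \<longleftrightarrow> cable_path V E ps \<and>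
     \<not> (\<exists>qs. cable_path V E qs \<and> length qs > length ps \<and> (sublist ps qs \<or> sublist (rev ps) qs))"

definition compatible :: "'a set \<Rightarrow> 'a set set \<Rightarrow> 'a set set \<Rightarrow> ('a \<Rightarrow> nat) \<Rightarrow> bool" where
  "compatible V E F f \<longleftrightarrow>
     (\<forall>v\<in>V. f v \<in> {1, 2, 3}) \<and>
     (\<forall>W\<in>witness V F. \<forall>x\<in>W. \<forall>y\<in>W. f x = f y) \<and>
     (\<forall>A B. {A, B} \<in> contr_edges V E F \<and> card A \<ge> 2 \<and> card B \<ge> 2
        \<longrightarrow> (\<forall>a\<in>A. \<forall>b\<in>B. f a \<noteq> f b)) \<and>
     (\<forall>ts. cable_path (witness V F) (contr_edges V E F) ts \<and> length ts \<ge> 3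
        \<and> card (hd ts) \<ge> 2 \<and> card (last ts) \<ge> 2
        \<and> (\<forall>i. 0 < i \<and> i + 1 < length ts \<longrightarrow> card (ts ! i) = 1)
        \<longrightarrow> (\<forall>a\<in>hd ts. \<forall>b\<in>ts ! 1. f a \<noteq> f b)
          \<and> (\<forall>a\<in>last ts. \<forall>b\<in>ts ! (length ts - 2). f a \<noteq> f b))"

definition monochromatic :: "('a \<Rightarrow> nat) \<Rightarrow> 'a set \<Rightarrow> bool" where
  "monochromatic f S \<longleftrightarrow> (\<exists>c. \<forall>x\<in>S. f x = c)"

definition mono_component :: "'a set \<Rightarrow> 'a set set \<Rightarrow> ('a \<Rightarrow> nat) \<Rightarrow> 'a set \<Rightarrow> bool" where
  "mono_component V E f S \<longleftrightarrow> S \<subseteq> V \<and> connected_on E S \<and> monochromatic f S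
     \<and> (\<forall>S'. S \<subset> S' \<and> S' \<subseteq> V \<and> connected_on E S' \<longrightarrow> \<not> monochromatic f S')"

definition component :: "'a set \<Rightarrow> 'a set set \<Rightarrow> 'a set \<Rightarrow> bool" where
  "component V E S \<longleftrightarrow> S \<subseteq> V \<and> connected_on E S
     \<and> (\<forall>S'. S \<subset> S' \<and> S' \<subseteq> V \<longrightarrow> \<not> connected_on E S')"

end

theory Submission
  imports Defs
begin

fun pedges :: "'a list \<Rightarrow> 'a set set" where
  "pedges (x # y # r) = insert {x, y} (pedges (y # r))"
| "pedges _ = {}"

lemma pedges_nth: "pedges xs = {{xs ! i, xs ! (i + 1)} | i. i + 1 < length xs}"
proof (induction xs rule: pedges.induct)
  case (1 x y r)
  have "{{(x # y # r) ! i, (x # y # r) ! (i + 1)} | i. i + 1 < length (x # y # r)}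
      = insert {x, y} {{(y # r) ! i, (y # r) ! (i + 1)} | i. i + 1 < length (y # r)}"
  proof (intro set_eqI iffI)
    fix e assume "e \<in> {{(x # y # r) ! i, (x # y # r) ! (i + 1)} | i. i + 1 < length (x # y # r)}"
    then obtain i where i: "e = {(x # y # r) ! i, (x # y # r) ! (i + 1)}" "i + 1 < length (x # y # r)" by blast
    show "e \<in> insert {x, y} {{(y # r) ! i, (y # r) ! (i + 1)} | i. i + 1 < length (y # r)}"
    proof (cases i)
      case 0 then show ?thesis using i by simp
    next
      case (Suc j) then show ?thesis using i by auto
    qed
  next
    fix e assume "e \<in> insert {x, y} {{(y # r) ! i, (y # r) ! (i + 1)} | i. i + 1 < length (y # r)}"
    then consider "e = {x, y}" | i where "e = {(y # r) ! i, (y # r) ! (i + 1)}" "i + 1 < length (y # r)" by blast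
    then show "e \<in> {{(x # y # r) ! i, (x # y # r) ! (i + 1)} | i. i + 1 < length (x # y # r)}"
    proof cases
      case 1 then show ?thesis by force
    next
      case 2 then show ?thesis
        by (auto intro!: exI[of _ "Suc i"])
    qed
  qed
  then show ?case using 1 by simp
qed auto

lemma pedges_Cons: "r \<noteq> [] \<Longrightarrow> pedges (x # r) = insert {x, hd r} (pedges r)"
  by (cases r) auto

lemma pedges_append: "pedges (xs @ ys) = pedges xs \<union> pedges ys \<union> (if xs \<noteq> [] \<and> ys \<noteq> [] then {{last xs, hd ys}} else {})"
proof (induction xs)
  case Nil then show ?case by simp
next
  case (Cons x r)
  show ?case
  proof (cases "r = []")
    case True then show ?thesis by (cases ys) auto
  next
    case False then show ?thesis using Cons by (auto simp: pedges_Cons)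
  qed
qed

lemma pedges_map: "pedges (map h xs) = (\<lambda>e. h ` e) ` pedges xs"
  by (induction xs rule: pedges.induct) auto

lemma pedges_elem: "e \<in> pedges xs \<Longrightarrow> \<exists>a b. e = {a, b} \<and> a \<in> set xs \<and> b \<in> set xs"
  by (induction xs rule: pedges.induct) auto

lemma cycle_edges_pedges:
  assumes "xs \<noteq> []"
  shows "cycle_edges xs = insert {last xs, hd xs} (pedges xs)"
proof -
  let ?n = "length xs"
  have "cycle_edges xs = {{xs ! i, xs ! ((i + 1) mod ?n)} | i. i < ?n}" by (simp add: cycle_edges_def)
  also have "\<dots> = insert {last xs, hd xs} {{xs ! i, xs ! (i + 1)} | i. i + 1 < ?n}"
  proof (intro set_eqI iffI)
    fix e assume "e \<in> {{xs ! i, xs ! ((i + 1) mod ?n)} | i. i < ?n}"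
    then obtain i where i: "e = {xs ! i, xs ! ((i + 1) mod ?n)}" "i < ?n" by blast
    show "e \<in> insert {last xs, hd xs} {{xs ! i, xs ! (i + 1)} | i. i + 1 < ?n}"
    proof (cases "i + 1 < ?n")
      case True then show ?thesis using i by auto
    next
      case False
      then have "i = ?n - 1" using i by simp
      then have "e = {last xs, hd xs}" using i assms by (simp add: last_conv_nth hd_conv_nth)
      then show ?thesis by simp
    qed
  next
    fix e assume "e \<in> insert {last xs, hd xs} {{xs ! i, xs ! (i + 1)} | i. i + 1 < ?n}"
    then consider "e = {last xs, hd xs}" | i where "e = {xs ! i, xs ! (i + 1)}" "i + 1 < ?n" by blast
    then show "e \<in> {{xs ! i, xs ! ((i + 1) mod ?n)} | i. i < ?n}"
    proof cases
      case 1
      then have "e = {xs ! (?n - 1), xs ! (((?n - 1) + 1) mod ?n)}" using assms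
        by (simp add: last_conv_nth hd_conv_nth)
      moreover have "?n - 1 < ?n" using assms by simp
      ultimately show ?thesis by blast
    next
      case 2 then show ?thesis by force
    qed
  qed
  also have "\<dots> = insert {last xs, hd xs} (pedges xs)" by (simp add: pedges_nth)
  finally show ?thesis .
qed

lemma is_cycle_iff: "is_cycle E c \<longleftrightarrow> length c \<ge> 3 \<and> distinct c \<and> cycle_edges c \<subseteq> E"
  unfolding is_cycle_def cycle_edges_def by blast

lemma cycle_edges_elem: "e \<in> cycle_edges xs \<Longrightarrow> \<exists>a b. e = {a, b} \<and> a \<in> set xs \<and> b \<in> set xs"
proof -
  assume "e \<in> cycle_edges xs"
  then have "xs \<noteq> []" by (auto simp: cycle_edges_def)
  then show ?thesis using \<open>e \<in> cycle_edges xs\<close> pedges_elem[of e xs]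
    by (auto simp: cycle_edges_pedges intro: last_in_set hd_in_set)
qed

lemma cycle_edges_map: "cycle_edges (map h xs) = (\<lambda>e. h ` e) ` cycle_edges xs"
proof (cases "xs = []")
  case True then show ?thesis by (simp add: cycle_edges_def)
next
  case False then show ?thesis
    by (simp add: cycle_edges_pedges pedges_map last_map hd_map)
qed

lemma cycle_edges_rotate1: "cycle_edges (rotate1 xs) = cycle_edges xs"
proof (cases xs)
  case Nil then show ?thesis by simp
next
  case (Cons a r)
  show ?thesis
  proof (cases "r = []")
    case True then show ?thesis using Cons by simp
  next
    case False
    then show ?thesis using Cons
      by (auto simp: cycle_edges_pedges pedges_append pedges_Cons)
  qed
qed

lemma cycle_edges_rotate: "cycle_edges (rotate n xs) = cycle_edges xs"
  by (induction n) (simp_all add: rotate_def cycle_edges_rotate1)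

lemma cycle_rotate_to:
  assumes "is_cycle E c" "x \<in> set c"
  shows "\<exists>r. is_cycle E (x # r) \<and> cycle_edges (x # r) = cycle_edges c \<and> set (x # r) = set c"
proof -
  obtain i where i: "i < length c" "c ! i = x" using assms(2) by (auto simp: in_set_conv_nth)
  let ?d = "rotate i c"
  have "?d \<noteq> []" using i by auto
  have "hd ?d = ?d ! 0" using \<open>?d \<noteq> []\<close> by (simp add: hd_conv_nth)
  also have "\<dots> = x" using i nth_rotate[of 0 c i] by (metis add_0_right gr_zeroI less_zeroE mod_less)
  finally have "hd ?d = x" .
  then have "?d = x # tl ?d" using \<open>?d \<noteq> []\<close> by (metis list.collapse)
  moreover have "is_cycle E ?d" using assms(1) by (simp add: is_cycle_iff cycle_edges_rotate)
  moreover have "cycle_edges ?d = cycle_edges c" by (simp add: cycle_edges_rotate)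
  ultimately show ?thesis by (metis set_rotate)
qed

definition cyc_prop :: "'a set set \<Rightarrow> bool" where
  "cyc_prop E \<longleftrightarrow> (\<forall>e\<in>E. \<forall>c1 c2. is_cycle E c1 \<and> is_cycle E c2 \<and> e \<in> cycle_edges c1 \<and> e \<in> cycle_edges c2
        \<longrightarrow> cycle_edges c1 = cycle_edges c2)"

lemma cyc_propD: "cyc_prop E \<Longrightarrow> e \<in> E \<Longrightarrow> is_cycle E c1 \<Longrightarrow> is_cycle E c2 \<Longrightarrow> e \<in> cycle_edges c1 \<Longrightarrow> e \<in> cycle_edges c2 \<Longrightarrow> cycle_edges c1 = cycle_edges c2"
  unfolding cyc_prop_def by blast

lemma cactus_iff: "cactus V E \<longleftrightarrow> graph V E \<and> connected_on E V \<and> cyc_prop E"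
  unfolding cactus_def cyc_prop_def by blast

lemma graph_edge: "graph V E \<Longrightarrow> {a, b} \<in> E \<Longrightarrow> a \<in> V \<and> b \<in> V \<and> a \<noteq> b"
  unfolding graph_def by (metis doubleton_eq_iff insert_absorb2 insert_not_empty singleton_insert_inj_eq)

lemma graph_edgeE: "graph V E \<Longrightarrow> \<epsilon> \<in> E \<Longrightarrow> \<exists>a b. \<epsilon> = {a, b} \<and> a \<in> V \<and> b \<in> V \<and> a \<noteq> b"
  unfolding graph_def by blast

lemma nbhd_iff: "u \<in> nbhd E v \<longleftrightarrow> {u, v} \<in> E"
  by (simp add: nbhd_def)

lemma nbhd_iff': "u \<in> nbhd E v \<longleftrightarrow> {v, u} \<in> E"
  by (simp add: nbhd_def insert_commute)

lemma cycle_set: "graph V E \<Longrightarrow> is_cycle E c \<Longrightarrow> set c \<subseteq> V"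
proof
  fix x assume g: "graph V E" and c: "is_cycle E c" and x: "x \<in> set c"
  then obtain i where "i < length c" "c ! i = x" by (auto simp: in_set_conv_nth)
  then have "{x, c ! ((i + 1) mod length c)} \<in> E" using c by (auto simp: is_cycle_def)
  then show "x \<in> V" using graph_edge[OF g] by blast
qed

lemma cycle_edge_in_set: "e \<in> cycle_edges c \<Longrightarrow> x \<in> e \<Longrightarrow> x \<in> set c"
  using cycle_edges_elem by fastforce

lemma pedges_mem_set: "e \<in> pedges c \<Longrightarrow> x \<in> e \<Longrightarrow> x \<in> set c"
  using pedges_elem by fastforce

lemma inj_on_Pow_image: "inj_on h A \<Longrightarrow> inj_on (\<lambda>e. h ` e) (Pow A)"
  unfolding inj_on_def by (meson PowD inj_on_image_eq_iff inj_onI inj_on_def)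

lemma cyc_prop_sub:
  fixes h :: "'b \<Rightarrow> 'c"
  assumes gr: "graph V' E'" and s: "s \<in> V'" and nb: "nbhd E' s = {p, q}" and pq: "p \<noteq> q"
    and npq: "{p, q} \<notin> E'"
    and inj: "inj_on h (V' - {s})"
    and ed: "\<And>u v. {u, v} \<in> E' \<Longrightarrow> u \<noteq> s \<Longrightarrow> v \<noteq> s \<Longrightarrow> {h u, h v} \<in> ET"
    and ehpq: "{h p, h q} \<in> ET"
    and cp: "cyc_prop ET"
  shows "cyc_prop E'"
proof -
  have "p \<in> nbhd E' s" "q \<in> nbhd E' s" using nb by auto
  then have sp: "{s, p} \<in> E'" "{s, q} \<in> E'" by (simp_all only: nbhd_iff')
  then have pV: "p \<in> V' - {s}" "q \<in> V' - {s}" using graph_edge[OF gr] by blast+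
  define A where "A c = cycle_edges c - {{s, p}, {s, q}}" for c
  have edge_s: "\<epsilon> \<in> {{s, p}, {s, q}}" if e1: "\<epsilon> \<in> E'" and e2: "s \<in> \<epsilon>" for \<epsilon>
  proof -
    obtain a b where ab: "\<epsilon> = {a, b}" using graph_edgeE[OF gr e1] by blast
    have "\<exists>x. \<epsilon> = {s, x}" using e2 ab by (metis empty_iff insert_commute insert_iff)
    then obtain x where x: "\<epsilon> = {s, x}" by blast
    then have "x \<in> nbhd E' s" using e1 by (simp add: nbhd_iff')
    then have "x = p \<or> x = q" using nb by simp
    then show ?thesis using x by blast
  qed
  have A_sub: "\<epsilon> \<subseteq> V' - {s}" if "\<epsilon> \<in> A c" "is_cycle E' c" for \<epsilon> c
  proof -
    have "\<epsilon> \<in> E'" using that by (auto simp: A_def is_cycle_iff)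
    then obtain a b where ab: "\<epsilon> = {a, b}" "a \<in> V'" "b \<in> V'" using graph_edgeE[OF gr] by blast
    have "s \<notin> \<epsilon>" using edge_s[OF \<open>\<epsilon> \<in> E'\<close>] that(1) by (auto simp: A_def)
    then show ?thesis using ab by auto
  qed
  have A_E: "\<epsilon> \<in> E'" if "\<epsilon> \<in> A c" "is_cycle E' c" for \<epsilon> c
    using that by (auto simp: A_def is_cycle_iff)
  have hpq_notin: "{h p, h q} \<notin> (\<lambda>e. h ` e) ` A c" if "is_cycle E' c" for c
  proof
    assume "{h p, h q} \<in> (\<lambda>e. h ` e) ` A c"
    then obtain \<epsilon> where e: "\<epsilon> \<in> A c" "h ` \<epsilon> = {h p, h q}" by auto
    have "h ` \<epsilon> = h ` {p, q}" using e by simp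
    moreover have "{p, q} \<subseteq> V' - {s}" using pV by auto
    ultimately have "\<epsilon> = {p, q}" using inj_on_image_eq_iff[OF inj A_sub[OF e(1) that]] by blast
    then show False using A_E[OF e(1) that] npq by simp
  qed
  have norm: "\<exists>d. is_cycle ET d \<and>
      cycle_edges d = (\<lambda>e. h ` e) ` A c \<union> (if s \<in> set c then {{h p, h q}} else {}) \<and>
      cycle_edges c = A c \<union> (if s \<in> set c then {{s, p}, {s, q}} else {})"
    if c: "is_cycle E' c" for c
  proof (cases "s \<in> set c")
    case False
    have setc: "set c \<subseteq> V' - {s}" using cycle_set[OF gr c] False by auto
    have "{s, p} \<notin> cycle_edges c" "{s, q} \<notin> cycle_edges c"
      using False cycle_edge_in_set[of "{s,p}" c s] cycle_edge_in_set[of "{s,q}" c s] by auto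
    then have Ac: "A c = cycle_edges c" unfolding A_def by auto
    have "is_cycle ET (map h c)"
      unfolding is_cycle_iff
    proof (intro conjI)
      show "3 \<le> length (map h c)" using c by (simp add: is_cycle_iff)
      show "distinct (map h c)" using c inj setc by (simp add: is_cycle_iff distinct_map inj_on_subset)
      show "cycle_edges (map h c) \<subseteq> ET"
      proof
        fix \<epsilon> assume "\<epsilon> \<in> cycle_edges (map h c)"
        then obtain \<delta> where d: "\<delta> \<in> cycle_edges c" "\<epsilon> = h ` \<delta>" by (auto simp: cycle_edges_map)
        then obtain a b where ab: "\<delta> = {a, b}" "a \<in> set c" "b \<in> set c" using cycle_edges_elem by blast
        have "\<delta> \<in> E'" using c d by (auto simp: is_cycle_iff)
        moreover have "a \<noteq> s" "b \<noteq> s" using ab False by auto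
        ultimately have "{h a, h b} \<in> ET" using ed ab(1) by simp
        then show "\<epsilon> \<in> ET" using d ab by simp
      qed
    qed
    moreover have "cycle_edges (map h c) = (\<lambda>e. h ` e) ` A c" using Ac by (simp add: cycle_edges_map)
    ultimately show ?thesis using False Ac by (intro exI[of _ "map h c"]) simp
  next
    case True
    obtain r where r: "is_cycle E' (s # r)" "cycle_edges (s # r) = cycle_edges c" "set (s # r) = set c"
      using cycle_rotate_to[OF c True] by blast
    have lr: "length r \<ge> 2" and dr: "distinct (s # r)" and er: "cycle_edges (s # r) \<subseteq> E'"
      using r(1) by (auto simp: is_cycle_iff)
    have rne: "r \<noteq> []" using lr by auto
    have ce: "cycle_edges (s # r) = insert {last r, s} (insert {s, hd r} (pedges r))"
      using rne by (simp add: cycle_edges_pedges pedges_Cons)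
    have e1: "{s, hd r} \<in> E'" and e2: "{last r, s} \<in> E'" using er ce by auto
    have "hd r \<in> nbhd E' s" using e1 by (simp only: nbhd_iff')
    moreover have "last r \<in> nbhd E' s" using e2 by (simp only: nbhd_iff)
    ultimately
    have hl: "hd r \<in> {p, q}" "last r \<in> {p, q}" using nb by auto
    have "hd r \<noteq> last r"
    proof -
      have "hd r = r ! 0" "last r = r ! (length r - 1)" using rne by (auto simp: hd_conv_nth last_conv_nth)
      moreover have "distinct r" using dr by simp
      moreover have "(0::nat) \<noteq> length r - 1" "0 < length r" "length r - 1 < length r" using lr by auto
      ultimately show ?thesis using nth_eq_iff_index_eq[of r 0 "length r - 1"] by simp
    qed
    then have hlc: "(hd r = p \<and> last r = q) \<or> (hd r = q \<and> last r = p)" using hl by auto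
    then have hlpq: "{last r, hd r} = {p, q}" by auto
    have pr_E: "pedges r \<subseteq> E'" using er ce by auto
    have snr: "s \<notin> set r" using dr by simp
    have setr: "set r \<subseteq> V' - {s}" using cycle_set[OF gr r(1)] snr by auto
    have l3: "length r \<ge> 3"
    proof (rule ccontr)
      assume "\<not> 3 \<le> length r"
      then have "length r = 2" using lr by simp
      then obtain x y where "r = [x, y]" by (cases r; cases "tl r") auto
      then have "{hd r, last r} \<in> pedges r" by simp
      then have "{last r, hd r} \<in> pedges r" by (simp add: insert_commute)
      then show False using pr_E hlpq npq by auto
    qed
    have s_notin_pe: "{s, p} \<notin> pedges r" "{s, q} \<notin> pedges r"
      using pedges_mem_set[of "{s,p}" r s] pedges_mem_set[of "{s,q}" r s] snr by auto
    have Ac: "A c = pedges r"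
    proof -
      have "{last r, s} \<in> {{s, p}, {s, q}}" "{s, hd r} \<in> {{s, p}, {s, q}}" using hlc by (elim disjE conjE; simp add: insert_commute)+
      then show ?thesis unfolding A_def using r(2) ce s_notin_pe by auto
    qed
    have cec: "cycle_edges c = A c \<union> {{s, p}, {s, q}}"
    proof -
      have "{{s, p}, {s, q}} = {{last r, s}, {s, hd r}}" using hlc by (elim disjE conjE; simp add: insert_commute)
      then show ?thesis using r(2) ce Ac unfolding A_def by auto
    qed
    have "is_cycle ET (map h r)"
      unfolding is_cycle_iff
    proof (intro conjI)
      show "3 \<le> length (map h r)" using l3 by simp
      show "distinct (map h r)" using dr inj setr by (simp add: distinct_map inj_on_subset)
      show "cycle_edges (map h r) \<subseteq> ET"
      proof
        fix \<epsilon> assume "\<epsilon> \<in> cycle_edges (map h r)"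
        then obtain \<delta> where d: "\<delta> \<in> cycle_edges r" "\<epsilon> = h ` \<delta>" by (auto simp: cycle_edges_map)
        show "\<epsilon> \<in> ET"
        proof (cases "\<delta> = {last r, hd r}")
          case True then show ?thesis using d hlpq ehpq by simp
        next
          case False
          then have "\<delta> \<in> pedges r" using d rne by (simp add: cycle_edges_pedges)
          then obtain a b where ab: "\<delta> = {a, b}" "a \<in> set r" "b \<in> set r" using pedges_elem by blast
          have "a \<noteq> s" "b \<noteq> s" using ab snr by auto
          moreover have "{a, b} \<in> E'" using ab pr_E \<open>\<delta> \<in> pedges r\<close> by auto
          ultimately have "{h a, h b} \<in> ET" using ed by simp
          then show ?thesis using d ab by simp
        qed
      qed
    qed
    moreover have "cycle_edges (map h r) = (\<lambda>e. h ` e) ` A c \<union> {{h p, h q}}"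
    proof -
      have "cycle_edges (map h r) = insert (h ` {last r, hd r}) ((\<lambda>e. h ` e) ` pedges r)"
        using rne by (simp add: cycle_edges_map cycle_edges_pedges)
      then show ?thesis using Ac hlpq by auto
    qed
    ultimately show ?thesis using True cec by (intro exI[of _ "map h r"]) simp
  qed
  show ?thesis
    unfolding cyc_prop_def
  proof (intro ballI allI impI)
    fix e c1 c2 assume e: "e \<in> E'" and cc: "is_cycle E' c1 \<and> is_cycle E' c2 \<and> e \<in> cycle_edges c1 \<and> e \<in> cycle_edges c2"
    then have c1: "is_cycle E' c1" and c2: "is_cycle E' c2" and e1: "e \<in> cycle_edges c1" and e2: "e \<in> cycle_edges c2" by auto
    obtain d1 where d1: "is_cycle ET d1" "cycle_edges d1 = (\<lambda>e. h ` e) ` A c1 \<union> (if s \<in> set c1 then {{h p, h q}} else {})"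
       "cycle_edges c1 = A c1 \<union> (if s \<in> set c1 then {{s, p}, {s, q}} else {})" using norm[OF c1] by blast
    obtain d2 where d2: "is_cycle ET d2" "cycle_edges d2 = (\<lambda>e. h ` e) ` A c2 \<union> (if s \<in> set c2 then {{h p, h q}} else {})"
       "cycle_edges c2 = A c2 \<union> (if s \<in> set c2 then {{s, p}, {s, q}} else {})" using norm[OF c2] by blast
    have common: "\<exists>\<epsilon>. \<epsilon> \<in> cycle_edges d1 \<and> \<epsilon> \<in> cycle_edges d2"
    proof (cases "s \<in> e")
      case True
      have "s \<in> set c1" by (rule cycle_edge_in_set[OF e1 True])
      moreover have "s \<in> set c2" by (rule cycle_edge_in_set[OF e2 True])
      ultimately show ?thesis by (intro exI[of _ "{h p, h q}"]) (simp add: d1(2) d2(2))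
    next
      case False
      then have "e \<in> A c1" "e \<in> A c2" using e1 e2 by (auto simp: A_def)
      then show ?thesis by (intro exI[of _ "h ` e"]) (simp add: d1(2) d2(2))
    qed
    then obtain \<epsilon> where "\<epsilon> \<in> cycle_edges d1" "\<epsilon> \<in> cycle_edges d2" by blast
    moreover have "\<epsilon> \<in> ET" using d1(1) calculation by (auto simp: is_cycle_iff)
    ultimately have eqd: "cycle_edges d1 = cycle_edges d2" using cyc_propD[OF cp _ d1(1) d2(1)] by blast
    have ss: "s \<in> set c1 \<longleftrightarrow> s \<in> set c2"
    proof -
      have k1: "s \<in> set c1 \<longleftrightarrow> {h p, h q} \<in> cycle_edges d1"
        using hpq_notin[OF c1] by (cases "s \<in> set c1") (simp_all add: d1(2))
      have k2: "s \<in> set c2 \<longleftrightarrow> {h p, h q} \<in> cycle_edges d2"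
        using hpq_notin[OF c2] by (cases "s \<in> set c2") (simp_all add: d2(2))
      show ?thesis using k1 k2 eqd by simp
    qed
    have "(\<lambda>e. h ` e) ` A c1 = (\<lambda>e. h ` e) ` A c2"
    proof -
      have "(\<lambda>e. h ` e) ` A c1 = cycle_edges d1 - {{h p, h q}}"
        using hpq_notin[OF c1] by (cases "s \<in> set c1") (simp_all add: d1(2))
      also have "\<dots> = cycle_edges d2 - {{h p, h q}}" using eqd by simp
      also have "\<dots> = (\<lambda>e. h ` e) ` A c2"
        using hpq_notin[OF c2] by (cases "s \<in> set c2") (simp_all add: d2(2))
      finally show ?thesis .
    qed
    moreover have s1: "A c1 \<subseteq> Pow (V' - {s})" using A_sub[OF _ c1] by blast
    moreover have s2: "A c2 \<subseteq> Pow (V' - {s})" using A_sub[OF _ c2] by blast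
    ultimately have "A c1 = A c2" using inj_on_image_eq_iff[OF inj_on_Pow_image[OF inj] s1 s2] by simp
    then show "cycle_edges c1 = cycle_edges c2" using d1(3) d2(3) ss by simp
  qed
qed

lemma rtrancl_simple_path:
  assumes "(a, b) \<in> (edge_rel E S)\<^sup>*" "a \<in> S"
  shows "\<exists>R. R \<noteq> [] \<and> hd R = a \<and> last R = b \<and> distinct R \<and> set R \<subseteq> S \<and> pedges R \<subseteq> E"
  using assms(1)
proof (induction rule: rtrancl_induct)
  case base
  then show ?case using assms(2) by (intro exI[of _ "[a]"]) auto
next
  case (step y z)
  then obtain R where R: "R \<noteq> []" "hd R = a" "last R = y" "distinct R" "set R \<subseteq> S" "pedges R \<subseteq> E" by blast
  have yz: "{y, z} \<in> E" "z \<in> S" using step(2) by (auto simp: edge_rel_def)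
  show ?case
  proof (cases "z \<in> set R")
    case True
    then obtain xs ys where xs: "R = xs @ z # ys" by (meson split_list)
    let ?R = "xs @ [z]"
    have "hd ?R = a" using R(2) xs by (cases xs) auto
    moreover have "pedges ?R \<subseteq> E"
      using R(6) xs by (auto simp: pedges_append pedges_Cons split: if_splits)
    moreover have "distinct ?R" "set ?R \<subseteq> S" using R(4,5) xs by auto
    ultimately show ?thesis by (intro exI[of _ ?R]) auto
  next
    case False
    let ?R = "R @ [z]"
    have "hd ?R = a" using R by simp
    moreover have "pedges ?R \<subseteq> E" using R(3,6) yz R(1) by (auto simp: pedges_append)
    moreover have "distinct ?R" "set ?R \<subseteq> S" using R(4,5) False yz by auto
    ultimately show ?thesis by (intro exI[of _ ?R]) auto
  qed
qed

definition wset :: "'a set \<Rightarrow> 'a set set \<Rightarrow> 'a \<Rightarrow> 'a set" where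
  "wset V F x = {y \<in> V. (x, y) \<in> (frel F)\<^sup>*}"

lemma witness_eq: "witness V F = wset V F ` V"
  unfolding witness_def wset_def[abs_def] by (rule refl)

lemma frel_sym: "sym (frel F)"
  by (rule symI) (simp add: frel_def insert_commute)

lemma frel_rtrancl_sym: "(a, b) \<in> (frel F)\<^sup>* \<Longrightarrow> (b, a) \<in> (frel F)\<^sup>*"
  by (rule symD[OF sym_rtrancl[OF frel_sym]])

lemma frel_mono: "F' \<subseteq> F \<Longrightarrow> (frel F')\<^sup>* \<subseteq> (frel F)\<^sup>*"
  by (rule rtrancl_mono) (auto simp: frel_def)

lemma wset_self: "x \<in> V \<Longrightarrow> x \<in> wset V F x"
  by (simp add: wset_def)

lemma wset_sub: "wset V F x \<subseteq> V"
  by (auto simp: wset_def)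

lemma wset_eq: "y \<in> wset V F x \<Longrightarrow> wset V F y = wset V F x"
proof -
  assume "y \<in> wset V F x"
  then have xy: "(x, y) \<in> (frel F)\<^sup>*" by (simp add: wset_def)
  then have yx: "(y, x) \<in> (frel F)\<^sup>*" by (rule frel_rtrancl_sym)
  have "(y, z) \<in> (frel F)\<^sup>* \<longleftrightarrow> (x, z) \<in> (frel F)\<^sup>*" for z
  proof
    assume "(y, z) \<in> (frel F)\<^sup>*" then show "(x, z) \<in> (frel F)\<^sup>*" using rtrancl_trans[OF xy] by simp
  next
    assume "(x, z) \<in> (frel F)\<^sup>*" then show "(y, z) \<in> (frel F)\<^sup>*" using rtrancl_trans[OF yx] by simp
  qed
  then show ?thesis unfolding wset_def by simp
qed

lemma wset_disj: "z \<in> wset V F x \<Longrightarrow> z \<in> wset V F y \<Longrightarrow> wset V F x = wset V F y"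
proof -
  assume a1: "z \<in> wset V F x" and a2: "z \<in> wset V F y"
  have "wset V F z = wset V F x" by (rule wset_eq[OF a1])
  moreover have "wset V F z = wset V F y" by (rule wset_eq[OF a2])
  ultimately show ?thesis by simp
qed

lemma witness_mem: "A \<in> witness V F \<Longrightarrow> x \<in> A \<Longrightarrow> A = wset V F x"
proof -
  assume "A \<in> witness V F" "x \<in> A"
  then obtain z where "A = wset V F z" by (auto simp: witness_eq)
  then show ?thesis using wset_eq[of x V F z] \<open>x \<in> A\<close> by simp
qed

lemma witness_nonempty: "A \<in> witness V F \<Longrightarrow> \<exists>x\<in>V. x \<in> A"
proof -
  assume "A \<in> witness V F"
  then obtain z where "z \<in> V" "A = wset V F z" by (auto simp: witness_eq)
  then show ?thesis using wset_self[of z V F] by blast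
qed

lemma contr_edges_iff:
  "{A, B} \<in> contr_edges V E F \<longleftrightarrow> A \<in> witness V F \<and> B \<in> witness V F \<and> A \<noteq> B \<and> (\<exists>a\<in>A. \<exists>b\<in>B. {a, b} \<in> E)"
proof
  assume "{A, B} \<in> contr_edges V E F"
  then obtain A' B' where h: "{A, B} = {A', B'}" "A' \<in> witness V F" "B' \<in> witness V F" "A' \<noteq> B'"
      "\<exists>a\<in>A'. \<exists>b\<in>B'. {a, b} \<in> E" unfolding contr_edges_def mem_Collect_eq by (elim exE conjE) blast
  from h(1) have "(A = A' \<and> B = B') \<or> (A = B' \<and> B = A')" by (simp add: doubleton_eq_iff)
  then show "A \<in> witness V F \<and> B \<in> witness V F \<and> A \<noteq> B \<and> (\<exists>a\<in>A. \<exists>b\<in>B. {a, b} \<in> E)"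
  proof
    assume "A = A' \<and> B = B'" then show ?thesis using h by blast
  next
    assume ab: "A = B' \<and> B = A'"
    from h(5) obtain a b where "a \<in> A'" "b \<in> B'" "{a, b} \<in> E" by blast
    then have "b \<in> A" "a \<in> B" "{b, a} \<in> E" using ab by (auto simp: insert_commute)
    then show ?thesis using h ab by blast
  qed
next
  assume "A \<in> witness V F \<and> B \<in> witness V F \<and> A \<noteq> B \<and> (\<exists>a\<in>A. \<exists>b\<in>B. {a, b} \<in> E)"
  then show "{A, B} \<in> contr_edges V E F" unfolding contr_edges_def mem_Collect_eq
    by (intro exI[of _ A] exI[of _ B]) simp
qed

lemma contr_edges_elem: "\<epsilon> \<in> contr_edges V E F \<Longrightarrow> \<exists>A B. \<epsilon> = {A, B} \<and> A \<in> witness V F \<and> B \<in> witness V F \<and> A \<noteq> B"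
  unfolding contr_edges_def mem_Collect_eq by (elim exE conjE) blast

lemma graph_contr: "finite V \<Longrightarrow> graph (witness V F) (contr_edges V E F)"
  unfolding graph_def
proof (intro conjI ballI)
  assume "finite V"
  then show "finite (witness V F)" by (simp add: witness_eq)
next
  fix \<epsilon> assume "\<epsilon> \<in> contr_edges V E F"
  from contr_edges_elem[OF this] show "\<exists>u v. u \<noteq> v \<and> u \<in> witness V F \<and> v \<in> witness V F \<and> \<epsilon> = {u, v}" by blast
qed

lemma edge_rel_mono: "S \<subseteq> S' \<Longrightarrow> edge_rel E S \<subseteq> edge_rel E S'"
  by (auto simp: edge_rel_def)

lemma edge_rel_rtrancl_mono: "S \<subseteq> S' \<Longrightarrow> (x, y) \<in> (edge_rel E S)\<^sup>* \<Longrightarrow> (x, y) \<in> (edge_rel E S')\<^sup>*"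
  using rtrancl_mono[OF edge_rel_mono] by blast

lemma edge_rel_sym: "(x, y) \<in> edge_rel E S \<Longrightarrow> (y, x) \<in> edge_rel E S"
  by (auto simp: edge_rel_def insert_commute)

lemma edge_rel_rtrancl_sym: "(x, y) \<in> (edge_rel E S)\<^sup>* \<Longrightarrow> (y, x) \<in> (edge_rel E S)\<^sup>*"
proof -
  have "sym (edge_rel E S)" by (rule symI) (rule edge_rel_sym)
  then have "sym ((edge_rel E S)\<^sup>*)" by (rule sym_rtrancl)
  then show "(x, y) \<in> (edge_rel E S)\<^sup>* \<Longrightarrow> (y, x) \<in> (edge_rel E S)\<^sup>*" unfolding sym_def by blast
qed

lemma contr_walk:
  assumes "(x, y) \<in> (edge_rel E S)\<^sup>*" "S \<subseteq> V" "\<And>z. z \<in> S \<Longrightarrow> wset V F z \<in> \<S>"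
  shows "(wset V F x, wset V F y) \<in> (edge_rel (contr_edges V E F) \<S>)\<^sup>*"
  using assms(1)
proof (induction rule: rtrancl_induct)
  case base then show ?case by simp
next
  case (step y z)
  have yz: "{y, z} \<in> E" "y \<in> S" "z \<in> S" using step(2) by (auto simp: edge_rel_def)
  show ?case
  proof (cases "wset V F y = wset V F z")
    case True then show ?thesis using step(3) by simp
  next
    case False
    have "y \<in> V" "z \<in> V" using yz assms(2) by auto
    then have "y \<in> wset V F y" "z \<in> wset V F z" by (simp_all add: wset_self)
    moreover have "wset V F y \<in> witness V F" "wset V F z \<in> witness V F"
      using yz assms(2) by (auto simp: witness_eq)
    ultimately have "{wset V F y, wset V F z} \<in> contr_edges V E F"
      using False yz(1) by (auto simp: contr_edges_iff)
    then have "(wset V F y, wset V F z) \<in> edge_rel (contr_edges V E F) \<S>"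
      using assms(3) yz by (simp add: edge_rel_def)
    then show ?thesis using step(3) by simp
  qed
qed

lemma connected_contr:
  assumes "connected_on E V"
  shows "connected_on (contr_edges V E F) (witness V F)"
  unfolding connected_on_def
proof (intro conjI ballI)
  show "witness V F \<noteq> {}" using assms by (auto simp: connected_on_def witness_eq)
next
  fix A B assume "A \<in> witness V F" "B \<in> witness V F"
  then obtain x y where xy: "x \<in> V" "y \<in> V" "A = wset V F x" "B = wset V F y" by (auto simp: witness_eq)
  then have "(x, y) \<in> (edge_rel E V)\<^sup>*" using assms by (simp add: connected_on_def)
  have "(wset V F x, wset V F y) \<in> (edge_rel (contr_edges V E F) (witness V F))\<^sup>*"
    by (rule contr_walk[OF \<open>(x, y) \<in> (edge_rel E V)\<^sup>*\<close>]) (simp_all add: witness_eq)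
  then show "(A, B) \<in> (edge_rel (contr_edges V E F) (witness V F))\<^sup>*" using xy by simp
qed

lemma mono_extend:
  assumes m: "mono_component V E f S" and x: "x \<in> S" and e: "{x, y} \<in> E" and y: "y \<in> V" and fy: "f y = f x"
  shows "y \<in> S"
proof (rule ccontr)
  assume ny: "y \<notin> S"
  let ?S = "insert y S"
  have SV: "S \<subseteq> V" and cS: "connected_on E S" and mS: "monochromatic f S"
    and mx: "\<forall>S'. S \<subset> S' \<and> S' \<subseteq> V \<and> connected_on E S' \<longrightarrow> \<not> monochromatic f S'"
    using m by (auto simp: mono_component_def)
  have sub: "S \<subset> ?S" using ny by auto
  have "?S \<subseteq> V" using SV y by auto
  moreover have "connected_on E ?S"
    unfolding connected_on_def
  proof (intro conjI ballI)
    show "?S \<noteq> {}" by simp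
  next
    fix a b assume a: "a \<in> ?S" and b: "b \<in> ?S"
    have ST: "\<And>u v. u \<in> S \<Longrightarrow> v \<in> S \<Longrightarrow> (u, v) \<in> (edge_rel E ?S)\<^sup>*"
    proof -
      fix u v assume "u \<in> S" "v \<in> S"
      then have "(u, v) \<in> (edge_rel E S)\<^sup>*" using cS by (simp add: connected_on_def)
      then show "(u, v) \<in> (edge_rel E ?S)\<^sup>*" by (rule edge_rel_rtrancl_mono[rotated]) blast
    qed
    have "(x, y) \<in> edge_rel E ?S" using e x by (simp add: edge_rel_def)
    then have xy: "(x, y) \<in> (edge_rel E ?S)\<^sup>*" by (rule r_into_rtrancl)
    have yx: "(y, x) \<in> (edge_rel E ?S)\<^sup>*" using edge_rel_rtrancl_sym[OF xy] .
    have ya: "\<And>u. u \<in> ?S \<Longrightarrow> (y, u) \<in> (edge_rel E ?S)\<^sup>*"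
    proof -
      fix u assume "u \<in> ?S"
      then consider "u = y" | "u \<in> S" by blast
      then show "(y, u) \<in> (edge_rel E ?S)\<^sup>*"
      proof cases
        case 1 then show ?thesis by simp
      next
        case 2 show ?thesis by (rule rtrancl_trans[OF yx ST[OF x 2]])
      qed
    qed
    have ay: "\<And>u. u \<in> ?S \<Longrightarrow> (u, y) \<in> (edge_rel E ?S)\<^sup>*"
      using ya edge_rel_rtrancl_sym by metis
    show "(a, b) \<in> (edge_rel E ?S)\<^sup>*"
    proof (cases "a = y")
      case True then show ?thesis using ya b by simp
    next
      case False
      then have "a \<in> S" using a by simp
      show ?thesis
      proof (cases "b = y")
        case True then show ?thesis using ay a by simp
      next
        case False then show ?thesis using ST \<open>a \<in> S\<close> b by simp
      qed
    qed
  qed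
  moreover have "monochromatic f ?S"
    using mS fy x unfolding monochromatic_def by auto
  ultimately show False using mx sub by blast
qed

lemma frel_V:
  assumes "graph V E" "F \<subseteq> E" "(a, b) \<in> (frel F)\<^sup>*" "a \<in> V"
  shows "b \<in> V"
  using assms(3,4)
proof (induction rule: rtrancl_induct)
  case base then show ?case by simp
next
  case (step y z)
  then have "{y, z} \<in> E" using assms(2) by (auto simp: frel_def)
  then show ?case using graph_edge[OF assms(1)] by blast
qed

lemma frel_wset:
  assumes "graph V E" "F \<subseteq> E" "(a, b) \<in> (frel F)\<^sup>*" "a \<in> V"
  shows "b \<in> wset V F a"
  unfolding wset_def using frel_V[OF assms] assms(3) by (intro CollectI conjI)

lemma compat_mono:
  assumes "compatible V E F f" "graph V E" "F \<subseteq> E" "x \<in> V" "(x, y) \<in> (frel F)\<^sup>*"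
  shows "f y = f x"
proof -
  have W: "wset V F x \<in> witness V F" using assms(4) by (simp add: witness_eq)
  have "\<forall>W\<in>witness V F. \<forall>x\<in>W. \<forall>y\<in>W. f x = f y" using assms(1) unfolding compatible_def by (elim conjE) assumption
  then have h: "\<forall>u\<in>wset V F x. \<forall>v\<in>wset V F x. f u = f v" using W by blast
  have "x \<in> wset V F x" using assms(4) by (rule wset_self)
  moreover have "y \<in> wset V F x" using frel_wset[OF assms(2,3,5,4)] .
  ultimately show ?thesis using h by blast
qed

lemma wset_in_mono:
  assumes "compatible V E F f" "graph V E" "F \<subseteq> E" "mono_component V E f S" "x \<in> S"
    "(x, y) \<in> (frel F)\<^sup>*"
  shows "y \<in> S"
  using assms(6)
proof (induction rule: rtrancl_induct)
  case base then show ?case using assms(5) by simp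
next
  case (step y z)
  have "S \<subseteq> V" using assms(4) unfolding mono_component_def by (elim conjE) assumption
  then have xV: "x \<in> V" using assms(5) by (rule subsetD)
  have "{y, z} \<in> F" using step(2) by (simp add: frel_def)
  then have e: "{y, z} \<in> E" using assms(3) by blast
  have xz: "(x, z) \<in> (frel F)\<^sup>*" using step(1,2) by (rule rtrancl_into_rtrancl)
  have fz: "f z = f x" by (rule compat_mono[OF assms(1-3) xV xz])
  have zV: "z \<in> V" by (rule frel_V[OF assms(2,3) xz xV])
  have "f y = f x" using compat_mono[OF assms(1-3) xV step(1)] .
  then show ?case using mono_extend[OF assms(4) step(3) e zV] fz by simp
qed

lemma len2: "R \<noteq> [] \<Longrightarrow> hd R \<noteq> last R \<Longrightarrow> 2 \<le> length R"
  by (cases R; cases "tl R") auto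

lemma rtrancl_closed:
  assumes "(a, b) \<in> (edge_rel E S)\<^sup>*" "a \<in> U"
    "\<And>u w. u \<in> U \<Longrightarrow> w \<in> S \<Longrightarrow> {u, w} \<in> E \<Longrightarrow> w \<in> U"
  shows "b \<in> U"
  using assms(1)
proof (induction rule: rtrancl_induct)
  case base then show ?case using assms(2) .
next
  case (step y z)
  then have "{y, z} \<in> E" "z \<in> S" by (simp_all add: edge_rel_def)
  then show ?case using assms(3) step(3) by blast
qed

locale setting =
  fixes V :: "'a set" and E F :: "'a set set" and f :: "'a \<Rightarrow> nat" and Y Z :: "'a set" and P :: "'a list"
  assumes G2: "two_connected V E"
    and FE: "F \<subseteq> E"
    and cact: "cactus (witness V F) (contr_edges V E F)"
    and CO: "compatible V E F f"
    and MY: "mono_component V E f Y" and MZ: "mono_component V E f Z" and YZ: "Y \<inter> Z = {}"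
    and LP: "length P \<ge> 2" and DP: "distinct P" and SP: "set P \<subseteq> V"
    and PY: "set P \<inter> Y = {}" and PZ: "set P \<inter> Z = {}"
    and ED: "\<And>i. i + 1 < length P \<Longrightarrow> {P ! i, P ! (i + 1)} \<in> E"
    and IN: "\<And>i. 0 < i \<Longrightarrow> i + 1 < length P \<Longrightarrow> nbhd E (P ! i) = {P ! (i - 1), P ! (i + 1)}"
    and HD: "nbhd E (P ! 0) \<subseteq> Y \<union> {P ! 1}"
    and LA: "nbhd E (P ! (length P - 1)) \<subseteq> Z \<union> {P ! (length P - 2)}"
    and TY: "\<exists>y1 y2. y1 \<noteq> y2 \<and> y1 \<in> Y \<and> y2 \<in> Y \<and> y1 \<in> nbhd E (P ! 0) \<and> y2 \<in> nbhd E (P ! 0)"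
    and TZ: "\<exists>y1 y2. y1 \<noteq> y2 \<and> y1 \<in> Z \<and> y2 \<in> Z \<and> y1 \<in> nbhd E (P ! (length P - 1)) \<and> y2 \<in> nbhd E (P ! (length P - 1))"
begin

abbreviation "l \<equiv> length P"
abbreviation "W \<equiv> wset V F"
abbreviation "WT \<equiv> witness V F"
abbreviation "ET \<equiv> contr_edges V E F"

lemma gr: "graph V E" using G2 unfolding two_connected_def by (elim conjE)
lemma Gconn: "connected_on E V" using G2 unfolding two_connected_def by (elim conjE)
lemma Gcut: "\<forall>v\<in>V. connected_on E (V - {v})" using G2 unfolding two_connected_def by (elim conjE)
lemma finV: "finite V" using gr unfolding graph_def by (elim conjE)

lemma YV: "Y \<subseteq> V" using MY unfolding mono_component_def by (elim conjE)
lemma ZV: "Z \<subseteq> V" using MZ unfolding mono_component_def by (elim conjE)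
lemma Yconn: "connected_on E Y" using MY unfolding mono_component_def by (elim conjE)
lemma Zconn: "connected_on E Z" using MZ unfolding mono_component_def by (elim conjE)

lemma cp: "cyc_prop ET" using cact unfolding cactus_iff by (elim conjE)

lemma Pnth: "i < l \<Longrightarrow> P ! i \<in> set P" by simp

lemma P0: "P ! 0 \<in> set P" using LP by (intro nth_mem) linarith
lemma P1: "P ! 1 \<in> set P" using LP by (intro nth_mem) linarith
lemma Plast: "P ! (l - 1) \<in> set P" using LP by (intro nth_mem) linarith

lemma Pidx: "i < l \<Longrightarrow> j < l \<Longrightarrow> P ! i = P ! j \<Longrightarrow> i = j"
  using DP nth_eq_iff_index_eq by blast

lemma Pin: "x \<in> set P \<Longrightarrow> \<exists>j<l. x = P ! j"
  by (metis in_set_conv_nth)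

lemma nb_out:
  assumes "j < l" "y \<in> nbhd E (P ! j)" "y \<notin> set P"
  shows "(j = 0 \<and> y \<in> Y) \<or> (j = l - 1 \<and> y \<in> Z)"
proof -
  consider "j = 0" | "0 < j \<and> j + 1 < l" | "j = l - 1" using assms(1) by linarith
  then show ?thesis
  proof cases
    case 1
    then have "y \<in> Y \<union> {P ! 1}" using HD assms(2) by blast
    moreover have "P ! 1 \<in> set P" using LP by simp
    ultimately show ?thesis using 1 assms(3) by blast
  next
    case 2
    then have "y \<in> {P ! (j - 1), P ! (j + 1)}" using IN assms(2) by blast
    moreover have "j - 1 < l" "j + 1 < l" using 2 by auto
    then have "P ! (j - 1) \<in> set P" "P ! (j + 1) \<in> set P" using Pnth by blast+
    ultimately show ?thesis using assms(3) by blast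
  next
    case 3
    then have "y \<in> Z \<union> {P ! (l - 2)}" using LA assms(2) by blast
    moreover have "P ! (l - 2) \<in> set P" using LP by simp
    ultimately show ?thesis using 3 assms(3) by blast
  qed
qed

lemma nb_in:
  assumes "i < l" "j < l" "P ! j \<in> nbhd E (P ! i)"
  shows "j = i + 1 \<or> i = j + 1"
proof -
  consider "i = 0" | "0 < i \<and> i + 1 < l" | "i = l - 1 \<and> i \<noteq> 0" using assms(1) by linarith
  then show ?thesis
  proof cases
    case 1
    then have "P ! j \<in> Y \<union> {P ! 1}" using HD assms(3) by blast
    moreover have "P ! j \<notin> Y" using PY assms(2) by (meson Pnth disjoint_iff)
    ultimately have "P ! j = P ! 1" by blast
    then have "j = 1" using Pidx[OF assms(2)] LP by simp
    then show ?thesis using 1 by simp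
  next
    case 2
    then have "P ! j \<in> {P ! (i - 1), P ! (i + 1)}" using IN assms(3) by blast
    then have "P ! j = P ! (i - 1) \<or> P ! j = P ! (i + 1)" by blast
    moreover have "i - 1 < l" "i + 1 < l" using 2 by auto
    ultimately have "j = i - 1 \<or> j = i + 1" using Pidx[OF assms(2)] by blast
    then show ?thesis using 2 by auto
  next
    case 3
    then have "P ! j \<in> Z \<union> {P ! (l - 2)}" using LA assms(3) by blast
    moreover have "P ! j \<notin> Z" using PZ assms(2) by (meson Pnth disjoint_iff)
    ultimately have "P ! j = P ! (l - 2)" by blast
    then have "j = l - 2" using Pidx[OF assms(2)] LP by simp
    then show ?thesis using 3 LP by arith
  qed
qed

lemma frelE: "(x, y) \<in> frel F \<Longrightarrow> {x, y} \<in> E"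
  using FE by (auto simp: frel_def)

lemma W_P:
  assumes "x \<in> set P" "(x, y) \<in> (frel F)\<^sup>*"
  shows "y \<in> set P"
  using assms(2)
proof (induction rule: rtrancl_induct)
  case base then show ?case using assms(1) .
next
  case (step y z)
  have xV: "x \<in> V" using assms(1) SP by blast
  have e: "{y, z} \<in> E" using step(2) by (rule frelE)
  have yV: "y \<in> V" using step(3) SP by blast
  have fy: "f y = f x" by (rule compat_mono[OF CO gr FE xV step(1)])
  have xz: "(x, z) \<in> (frel F)\<^sup>*" using step(1,2) by (rule rtrancl_into_rtrancl)
  have fz: "f z = f x" by (rule compat_mono[OF CO gr FE xV xz])
  have zV: "z \<in> V" by (rule frel_V[OF gr FE xz xV])
  show ?case
  proof (rule ccontr)
    assume zP: "z \<notin> set P"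
    obtain j where j: "j < l" "y = P ! j" using Pin[OF step(3)] by blast
    have "z \<in> nbhd E (P ! j)" using e j by (simp add: nbhd_iff insert_commute)
    then have "(j = 0 \<and> z \<in> Y) \<or> (j = l - 1 \<and> z \<in> Z)" using nb_out[OF j(1)] zP by blast
    then show False
    proof
      assume "j = 0 \<and> z \<in> Y"
      then have "y \<in> Y" using mono_extend[OF MY _ _ yV] e fy fz by (metis insert_commute)
      then show False using PY step(3) by blast
    next
      assume "j = l - 1 \<and> z \<in> Z"
      then have "y \<in> Z" using mono_extend[OF MZ _ _ yV] e fy fz by (metis insert_commute)
      then show False using PZ step(3) by blast
    qed
  qed
qed

lemma WP_sub: "x \<in> set P \<Longrightarrow> W x \<subseteq> set P"
  using W_P by (auto simp: wset_def)

lemma WY_sub: "x \<in> Y \<Longrightarrow> W x \<subseteq> Y"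
  using wset_in_mono[OF CO gr FE MY] by (auto simp: wset_def)

lemma WZ_sub: "x \<in> Z \<Longrightarrow> W x \<subseteq> Z"
  using wset_in_mono[OF CO gr FE MZ] by (auto simp: wset_def)

lemma W_in_WT: "x \<in> V \<Longrightarrow> W x \<in> WT"
  by (simp add: witness_eq)

end

context setting begin

lemma path_avoid_P:
  assumes y1: "y1 \<in> Y"
  shows "\<exists>z\<in>Z. (y1, z) \<in> (edge_rel E (V - set P))\<^sup>*"
proof (rule ccontr)
  assume nz: "\<not> (\<exists>z\<in>Z. (y1, z) \<in> (edge_rel E (V - set P))\<^sup>*)"
  define U where "U = {w \<in> V - set P. (y1, w) \<in> (edge_rel E (V - set P))\<^sup>*}"
  have x0V: "P ! 0 \<in> V" using SP P0 by blast
  have y1V: "y1 \<in> V - {P ! 0}" using y1 YV PY P0 by blast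
  obtain z0 where z0: "z0 \<in> Z" using TZ by blast
  have z0V: "z0 \<in> V - {P ! 0}" using z0 ZV PZ P0 by blast
  have conn: "connected_on E (V - {P ! 0})" using Gcut x0V by blast
  then have path: "(y1, z0) \<in> (edge_rel E (V - {P ! 0}))\<^sup>*" using y1V z0V by (simp add: connected_on_def)
  have y1U: "y1 \<in> U" using y1 YV PY unfolding U_def by auto
  have "z0 \<in> U"
  proof (rule rtrancl_closed[OF path y1U])
    fix u w assume u: "u \<in> U" and w: "w \<in> V - {P ! 0}" and e: "{u, w} \<in> E"
    have uV: "u \<in> V - set P" and pu: "(y1, u) \<in> (edge_rel E (V - set P))\<^sup>*" using u by (simp_all add: U_def)
    show "w \<in> U"
    proof (cases "w \<in> set P")
      case False
      then have "(u, w) \<in> edge_rel E (V - set P)" using uV w e by (simp add: edge_rel_def)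
      then have "(y1, w) \<in> (edge_rel E (V - set P))\<^sup>*" using pu by simp
      then show ?thesis using False w unfolding U_def by simp
    next
      case True
      then obtain j where j: "j < l" "w = P ! j" using Pin by blast
      have "u \<in> nbhd E (P ! j)" using e j by (simp add: nbhd_iff)
      then have "(j = 0 \<and> u \<in> Y) \<or> (j = l - 1 \<and> u \<in> Z)" using nb_out[OF j(1)] uV by blast
      moreover have "j \<noteq> 0" using w j by (metis DiffD2 singletonI)
      ultimately have "u \<in> Z" by blast
      then show ?thesis using nz pu by blast
    qed
  qed
  then show False using nz z0 unfolding U_def by blast
qed

lemma descend:
  assumes "i < l" "\<And>j. i < j \<Longrightarrow> j < l \<Longrightarrow> P ! j \<in> S" "S \<subseteq> V"
  shows "\<And>d. i + 1 + d < l \<Longrightarrow> (P ! (i + 1 + d), P ! (i + 1)) \<in> (edge_rel E S)\<^sup>*"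
proof -
  fix d show "i + 1 + d < l \<Longrightarrow> (P ! (i + 1 + d), P ! (i + 1)) \<in> (edge_rel E S)\<^sup>*"
  proof (induction d)
    case 0 then show ?case by simp
  next
    case (Suc d)
    have e: "{P ! (i + 1 + d), P ! (i + 1 + d + 1)} \<in> E" using ED Suc(2) by simp
    have "P ! (i + 1 + d) \<in> S" "P ! (i + 1 + Suc d) \<in> S" using assms(2) Suc(2) by simp_all
    then have "(P ! (i + 1 + Suc d), P ! (i + 1 + d)) \<in> edge_rel E S"
      using e by (simp add: edge_rel_def insert_commute)
    moreover have "(P ! (i + 1 + d), P ! (i + 1)) \<in> (edge_rel E S)\<^sup>*" using Suc by simp
    ultimately show ?case by (rule converse_rtrancl_into_rtrancl)
  qed
qed

lemma side_hd:
  assumes y1: "y1 \<in> Y" "y1 \<in> nbhd E (P ! 0)" and y2: "y2 \<in> Y" "y2 \<in> nbhd E (P ! 0)"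
  shows "W y1 = W y2"
proof (rule ccontr)
  assume neq: "W y1 \<noteq> W y2"
  define x0 where "x0 = P ! 0"
  define X where "X = W x0"
  have x0P: "x0 \<in> set P" using P0 by (simp add: x0_def)
  have x0V: "x0 \<in> V" using x0P SP by blast
  have XP: "X \<subseteq> set P" using WP_sub[OF x0P] by (simp add: X_def)
  have x0X: "x0 \<in> X" using wset_self[OF x0V] by (simp add: X_def)
  have XWT: "X \<in> WT" using W_in_WT[OF x0V] by (simp add: X_def)
  define I where "I = {j. j < l \<and> P ! j \<in> X}"
  have finI: "finite I" unfolding I_def by simp
  have "0 < l" using LP by linarith
  then have "0 \<in> I" using x0X by (simp add: I_def x0_def)
  then have Ine: "I \<noteq> {}" by blast
  define i where "i = Max I"
  have iI: "i \<in> I" using Max_in[OF finI Ine] by (simp add: i_def)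
  then have il: "i < l" and PiX: "P ! i \<in> X" by (simp_all add: I_def)
  have imax: "\<And>j. j < l \<Longrightarrow> P ! j \<in> X \<Longrightarrow> j \<le> i"
    using Max_ge[OF finI] by (simp add: I_def i_def)
  have y1V: "y1 \<in> V" and y2V: "y2 \<in> V" using y1 y2 YV by blast+
  have YX: "Y \<inter> X = {}" using XP PY by blast
  have ZX: "Z \<inter> X = {}" using XP PZ by blast
  obtain zl where zl: "zl \<in> Z" "zl \<in> nbhd E (P ! (l - 1))" using TZ by blast
  have zlV: "zl \<in> V" using zl ZV by blast
  obtain z where z: "z \<in> Z" "(y1, z) \<in> (edge_rel E (V - set P))\<^sup>*" using path_avoid_P[OF y1(1)] by blast
  have VPX: "V - set P \<subseteq> V - X" using XP by blast
  have ZVX: "Z \<subseteq> V - X" using ZV ZX by blast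
  have p1: "(y1, z) \<in> (edge_rel E (V - X))\<^sup>*" using edge_rel_rtrancl_mono[OF VPX z(2)] .
  have "(z, zl) \<in> (edge_rel E Z)\<^sup>*" using Zconn z(1) zl(1) by (simp add: connected_on_def)
  then have p2: "(z, zl) \<in> (edge_rel E (V - X))\<^sup>*" using edge_rel_rtrancl_mono[OF ZVX] by blast
  have p12: "(y1, zl) \<in> (edge_rel E (V - X))\<^sup>*" using p1 p2 by (rule rtrancl_trans)
  define u where "u = (if i = l - 1 then zl else P ! (i + 1))"
  have ufacts: "u \<in> V - X \<and> u \<notin> Y \<and> {P ! i, u} \<in> E \<and> (y1, u) \<in> (edge_rel E (V - X))\<^sup>*"
  proof (cases "i = l - 1")
    case True
    then have u: "u = zl" by (simp add: u_def)
    have "{P ! i, zl} \<in> E" using zl(2) True by (simp add: nbhd_iff insert_commute)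
    then show ?thesis using u zlV zl(1) ZX YZ p12 by blast
  next
    case False
    then have u: "u = P ! (i + 1)" and i1: "i + 1 < l" using il by (simp_all add: u_def)
    have notX: "\<And>j. i < j \<Longrightarrow> j < l \<Longrightarrow> P ! j \<in> V - X"
    proof -
      fix j assume "i < j" "j < l"
      then show "P ! j \<in> V - X" using imax[of j] SP by (auto dest: Pnth)
    qed
    have dd: "(P ! (i + 1 + (l - 1 - (i + 1))), P ! (i + 1)) \<in> (edge_rel E (V - X))\<^sup>*"
      by (rule descend[where S = "V - X"]) (use il notX i1 in auto)
    have eqi: "i + 1 + (l - 1 - (i + 1)) = l - 1" using i1 by arith
    have d: "(P ! (l - 1), P ! (i + 1)) \<in> (edge_rel E (V - X))\<^sup>*" using dd unfolding eqi .
    have "{zl, P ! (l - 1)} \<in> E" using zl(2) by (simp add: nbhd_iff)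
    moreover have "P ! (l - 1) \<in> V - X" using notX i1 by simp
    ultimately have "(zl, P ! (l - 1)) \<in> edge_rel E (V - X)" using zlV ZX zl(1) by (auto simp: edge_rel_def)
    then have "(y1, P ! (l - 1)) \<in> (edge_rel E (V - X))\<^sup>*" using p12 by simp
    then have "(y1, u) \<in> (edge_rel E (V - X))\<^sup>*" using d u by simp
    moreover have "u \<in> V - X" using notX i1 u by simp
    moreover have "u \<notin> Y" using PY u i1 by (auto dest: Pnth)
    moreover have "{P ! i, u} \<in> E" using ED i1 u by simp
    ultimately show ?thesis by blast
  qed
  then have uV: "u \<in> V" and uX: "u \<notin> X" and uY: "u \<notin> Y" and eu: "{P ! i, u} \<in> E"
    and pu: "(y1, u) \<in> (edge_rel E (V - X))\<^sup>*" by simp_all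
  have y1X: "y1 \<notin> X" using YX y1(1) by blast
  have y2X: "y2 \<notin> X" using YX y2(1) by blast
  have SX: "\<And>z. z \<in> V - X \<Longrightarrow> W z \<in> WT - {X}"
  proof -
    fix z assume "z \<in> V - X"
    then have zV: "z \<in> V" and zX: "z \<notin> X" by simp_all
    have "z \<in> W z" by (rule wset_self[OF zV])
    then have "W z \<noteq> X" using zX by blast
    then show "W z \<in> WT - {X}" using W_in_WT[OF zV] by simp
  qed
  have tw1: "(W y1, W u) \<in> (edge_rel ET (WT - {X}))\<^sup>*"
    by (rule contr_walk[OF pu]) (use SX in auto)
  obtain R where R: "R \<noteq> []" "hd R = W y1" "last R = W u" "distinct R" "set R \<subseteq> WT - {X}" "pedges R \<subseteq> ET"
  proof -
    have "W y1 \<in> WT - {X}" using SX y1V y1X by simp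
    then show ?thesis using rtrancl_simple_path[OF tw1] that by blast
  qed
  have "(y1, y2) \<in> (edge_rel E Y)\<^sup>*" using Yconn y1(1) y2(1) by (simp add: connected_on_def)
  have SY: "\<And>z. z \<in> Y \<Longrightarrow> W z \<in> {D \<in> WT. D \<subseteq> Y}"
    using WY_sub W_in_WT YV by blast
  have tw2: "(W y1, W y2) \<in> (edge_rel ET {D \<in> WT. D \<subseteq> Y})\<^sup>*"
    by (rule contr_walk[OF \<open>(y1, y2) \<in> (edge_rel E Y)\<^sup>*\<close> YV SY])
  obtain R1 where R1: "R1 \<noteq> []" "hd R1 = W y1" "last R1 = W y2" "distinct R1" "set R1 \<subseteq> {D \<in> WT. D \<subseteq> Y}" "pedges R1 \<subseteq> ET"
  proof -
    have "W y1 \<in> {D \<in> WT. D \<subseteq> Y}" using SY y1(1) by simp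
    then show ?thesis using rtrancl_simple_path[OF tw2] that by blast
  qed
  have XR1: "X \<notin> set R1" using R1(5) x0X x0P PY by blast
  have XR: "X \<notin> set R" using R(5) by blast
  have uWu: "u \<in> W u" using wset_self[OF uV] .
  have y1W: "y1 \<in> W y1" using wset_self[OF y1V] .
  have y2W: "y2 \<in> W y2" using wset_self[OF y2V] .
  have Wy1Y: "W y1 \<subseteq> Y" using WY_sub[OF y1(1)] .
  have Wu_ne: "W y1 \<noteq> W u" using Wy1Y uWu uY by blast
  have lR: "length R \<ge> 2" using len2[OF R(1)] R(2,3) Wu_ne by simp
  have lR1: "length R1 \<ge> 2" using len2[OF R1(1)] R1(2,3) neq by simp
  have eXA1: "{X, W y1} \<in> ET"
  proof -
    have "X \<noteq> W y1" using y1W y1X by blast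
    moreover have "{x0, y1} \<in> E" using y1(2) by (simp add: x0_def nbhd_iff')
    ultimately show ?thesis using XWT W_in_WT[OF y1V] x0X y1W by (auto simp: contr_edges_iff)
  qed
  have eXA2: "{W y2, X} \<in> ET"
  proof -
    have "X \<noteq> W y2" using y2W y2X by blast
    moreover have "{y2, x0} \<in> E" using y2(2) by (simp add: x0_def nbhd_iff)
    ultimately show ?thesis using XWT W_in_WT[OF y2V] x0X y2W by (auto simp: contr_edges_iff)
  qed
  have eXU: "{W u, X} \<in> ET"
  proof -
    have "X \<noteq> W u" using uWu uX by blast
    moreover have "{u, P ! i} \<in> E" using eu by (simp add: insert_commute)
    ultimately show ?thesis using XWT W_in_WT[OF uV] PiX uWu by (auto simp: contr_edges_iff)
  qed
  have ce1: "cycle_edges (X # R1) = insert {W y2, X} (insert {X, W y1} (pedges R1))"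
    using R1 by (simp add: cycle_edges_pedges pedges_Cons)
  have ce2: "cycle_edges (X # R) = insert {W u, X} (insert {X, W y1} (pedges R))"
    using R by (simp add: cycle_edges_pedges pedges_Cons)
  have C1: "is_cycle ET (X # R1)"
    unfolding is_cycle_iff using lR1 R1(4,6) XR1 ce1 eXA1 eXA2 by simp
  have C2: "is_cycle ET (X # R)"
    unfolding is_cycle_iff using lR R(4,6) XR ce2 eXA1 eXU by simp
  have "cycle_edges (X # R1) = cycle_edges (X # R)"
    by (rule cyc_propD[OF cp eXA1 C1 C2]) (simp_all add: ce1 ce2)
  then have "{W u, X} \<in> cycle_edges (X # R1)" using ce2 by simp
  then have "W u \<in> set (X # R1)" by (rule cycle_edge_in_set) simp
  then have "W u = X \<or> W u \<subseteq> Y" using R1(5) by auto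
  then show False using uWu uX uY by blast
qed


lemma l0: "0 < l" using LP by linarith

lemma revn: "i < l \<Longrightarrow> rev P ! i = P ! (l - 1 - i)"
  by (simp add: rev_nth)

lemma rev_setting: "setting V E F f Z Y (rev P)"
proof -
  have r0: "rev P ! 0 = P ! (l - 1)" using revn[OF l0] by simp
  have r1: "rev P ! 1 = P ! (l - 2)" using revn[of 1] LP by (simp add: numeral_2_eq_2)
  have rl1: "rev P ! (l - 1) = P ! 0" using revn[of "l - 1"] LP by simp
  have rl2: "rev P ! (l - 2) = P ! 1"
  proof -
    have "l - 2 < l" "l - 1 - (l - 2) = 1" using LP by arith+
    then show ?thesis using revn[of "l - 2"] by simp
  qed
  have ED': "{rev P ! i, rev P ! (i + 1)} \<in> E" if i: "i + 1 < l" for i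
  proof -
    define j where "j = l - 2 - i"
    have j1: "j + 1 < l" using i unfolding j_def by arith
    have a1: "l - 1 - i = j + 1" "l - 1 - (i + 1) = j" using i unfolding j_def by arith+
    have il: "i < l" "i + 1 < l" using i by arith+
    have "rev P ! i = P ! (j + 1)" using revn[OF il(1)] a1(1) by (simp only:)
    moreover have "rev P ! (i + 1) = P ! j" using revn[OF il(2)] a1(2) by (simp only:)
    ultimately show ?thesis using ED[OF j1] by (simp add: insert_commute)
  qed
  have IN': "nbhd E (rev P ! i) = {rev P ! (i - 1), rev P ! (i + 1)}" if i: "0 < i" "i + 1 < l" for i
  proof -
    define m where "m = l - 1 - i"
    have m: "0 < m" "m + 1 < l" using i unfolding m_def by arith+
    have a1: "l - 1 - (i - 1) = m + 1" "l - 1 - (i + 1) = m - 1" using i unfolding m_def by arith+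
    have il: "i < l" "i - 1 < l" "i + 1 < l" using i by arith+
    have "rev P ! i = P ! m" using revn[OF il(1)] by (simp only: m_def)
    moreover have "rev P ! (i - 1) = P ! (m + 1)" using revn[OF il(2)] a1(1) by (simp only:)
    moreover have "rev P ! (i + 1) = P ! (m - 1)" using revn[OF il(3)] a1(2) by (simp only:)
    ultimately show ?thesis using IN[OF m] by (simp add: insert_commute)
  qed
  show ?thesis
    apply unfold_locales
    subgoal by (rule G2)
    subgoal by (rule FE)
    subgoal by (rule cact)
    subgoal by (rule CO)
    subgoal by (rule MZ)
    subgoal by (rule MY)
    subgoal using YZ by blast
    subgoal using LP by simp
    subgoal using DP by simp
    subgoal using SP by simp
    subgoal using PZ by simp
    subgoal using PY by simp
    subgoal for i using ED' by simp
    subgoal for i using IN' by simp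
    subgoal using LA r0 r1 by simp
    subgoal using HD rl1 rl2 by simp
    subgoal using TZ r0 by simp
    subgoal using TY rl1 by simp
    done
qed

lemma side_last:
  assumes "z1 \<in> Z" "z1 \<in> nbhd E (P ! (l - 1))" "z2 \<in> Z" "z2 \<in> nbhd E (P ! (l - 1))"
  shows "W z1 = W z2"
proof -
  interpret R: setting V E F f Z Y "rev P" by (rule rev_setting)
  have h: "rev P ! 0 = P ! (l - 1)" using revn[OF l0] by simp
  have "z1 \<in> nbhd E (rev P ! 0)" "z2 \<in> nbhd E (rev P ! 0)" using assms(2,4) h by simp_all
  then show ?thesis using R.side_hd[OF assms(1) _ assms(3)] by blast
qed

lemma claim2_Y: "\<exists>D\<in>WT. card D \<ge> 2 \<and> D \<subseteq> Y"
proof -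
  obtain y1 y2 where y: "y1 \<noteq> y2" "y1 \<in> Y" "y2 \<in> Y" "y1 \<in> nbhd E (P ! 0)" "y2 \<in> nbhd E (P ! 0)"
    using TY by blast
  have eq: "W y1 = W y2" using side_hd y by blast
  have y1V: "y1 \<in> V" and y2V: "y2 \<in> V" using y YV by blast+
  have "y1 \<in> W y1" by (rule wset_self[OF y1V])
  moreover have "y2 \<in> W y2" by (rule wset_self[OF y2V])
  then have "y2 \<in> W y1" using eq by simp
  moreover have "finite (W y1)" using finV wset_sub by (rule finite_subset[rotated])
  ultimately have "card {y1, y2} \<le> card (W y1)" by (intro card_mono) auto
  then have "card (W y1) \<ge> 2" using y(1) by simp
  then show ?thesis using W_in_WT[OF y1V] WY_sub[OF y(2)] by blast
qed

lemma claim2_Z: "\<exists>D\<in>WT. card D \<ge> 2 \<and> D \<subseteq> Z"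
proof -
  interpret R: setting V E F f Z Y "rev P" by (rule rev_setting)
  show ?thesis by (rule R.claim2_Y)
qed

end

lemma frel_iff: "(x, y) \<in> frel F \<longleftrightarrow> {x, y} \<in> F"
  by (simp add: frel_def)

locale setting_min = setting +
  assumes MIN: "\<forall>F'. F' \<subset> F \<longrightarrow> \<not> cactus (witness V F') (contr_edges V E F')"
begin

lemma Fedge:
  assumes j: "j < l" and e: "{P ! j, y} \<in> F"
  shows "\<exists>m. m + 1 < l \<and> {P ! m, P ! (m + 1)} \<in> F \<and> {P ! j, y} = {P ! m, P ! (m + 1)}"
proof -
  have "(P ! j, y) \<in> frel F" using e by (simp add: frel_iff)
  then have "y \<in> set P" using W_P[OF Pnth[OF j]] by blast
  then obtain j' where j': "j' < l" "y = P ! j'" using Pin by blast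
  have "{P ! j, P ! j'} \<in> E" using e j' FE by blast
  then have "P ! j' \<in> nbhd E (P ! j)" by (simp add: nbhd_iff')
  then have "j' = j + 1 \<or> j = j' + 1" using nb_in[OF j j'(1)] by blast
  then show ?thesis
  proof
    assume "j' = j + 1"
    then show ?thesis using e j' by blast
  next
    assume h: "j = j' + 1"
    then have "{P ! j, y} = {P ! j', P ! (j' + 1)}" using j' by (simp add: insert_commute)
    then show ?thesis using e j h by (intro exI[of _ j']) simp
  qed
qed

theorem claim1: "\<forall>v\<in>set P. {v} \<in> WT"
proof (rule ccontr)
  assume "\<not> (\<forall>v\<in>set P. {v} \<in> WT)"
  then obtain v where vP: "v \<in> set P" and nv: "{v} \<notin> WT" by blast
  have vV: "v \<in> V" using vP SP by blast
  have vW: "v \<in> W v" by (rule wset_self[OF vV])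
  have "W v \<noteq> {v}" using nv W_in_WT[OF vV] by auto
  then obtain w where w: "w \<in> W v" "w \<noteq> v" using vW by blast
  then have "(v, w) \<in> (frel F)\<^sup>*" by (simp add: wset_def)
  then obtain y where vy: "(v, y) \<in> frel F" using w(2) by (metis converse_rtranclE)
  obtain j where j: "j < l" "v = P ! j" using Pin[OF vP] by blast
  have "{P ! j, y} \<in> F" using vy j by (simp add: frel_iff)
  then obtain m0 where m0: "m0 + 1 < l" "{P ! m0, P ! (m0 + 1)} \<in> F" using Fedge[OF j(1)] by blast
  define K where "K = {m. m + 1 < l \<and> {P ! m, P ! (m + 1)} \<in> F}"
  have finK: "finite K" unfolding K_def by (rule finite_subset[of _ "{..<l}"]) auto
  have "m0 \<in> K" using m0 by (simp add: K_def)
  then have Kne: "K \<noteq> {}" by blast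
  define k where "k = Max K"
  have "k \<in> K" using Max_in[OF finK Kne] by (simp add: k_def)
  then have k1: "k + 1 < l" and eF: "{P ! k, P ! (k + 1)} \<in> F" by (simp_all add: K_def)
  have kmax: "\<And>m. m + 1 < l \<Longrightarrow> {P ! m, P ! (m + 1)} \<in> F \<Longrightarrow> m \<le> k"
    using Max_ge[OF finK] by (simp add: K_def k_def)
  have Fedge': "\<exists>m\<le>k. m + 1 < l \<and> {P ! j, z} = {P ! m, P ! (m + 1)}" if "j < l" "{P ! j, z} \<in> F" for j z
    using Fedge[OF that] kmax by blast
  define a where "a = P ! k"
  define b where "b = P ! (k + 1)"
  define e where "e = {a, b}"
  have kl: "k < l" using k1 by simp
  have aV: "a \<in> V" and bV: "b \<in> V" using SP Pnth[OF kl] Pnth[OF k1] by (auto simp: a_def b_def)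
  have ab: "a \<noteq> b" using Pidx[OF kl k1] by (auto simp: a_def b_def)
  have eF': "e \<in> F" using eF by (simp add: e_def a_def b_def)
  define F' where "F' = F - {e}"
  have F'F: "F' \<subset> F" using eF' by (auto simp: F'_def)
  have F'E: "F' \<subseteq> E" using FE by (auto simp: F'_def)
  have Xidx: "\<exists>j\<le>k + 1. j < l \<and> y = P ! j" if "y \<in> W b" for y
  proof -
    have "(b, y) \<in> (frel F)\<^sup>*" using that by (simp add: wset_def)
    then show ?thesis
    proof (induction rule: rtrancl_induct)
      case base then show ?case using k1 by (auto simp: b_def)
    next
      case (step y z)
      then obtain j where j: "j \<le> k + 1" "j < l" "y = P ! j" by blast
      have "{P ! j, z} \<in> F" using step(2) j by (simp add: frel_iff)
      then obtain m where m: "m \<le> k" "m + 1 < l" "{P ! j, z} = {P ! m, P ! (m + 1)}" using Fedge'[OF j(2)] by blast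
      then have "z = P ! m \<or> z = P ! (m + 1)" by (metis doubleton_eq_iff)
      then show ?case using m by (metis Suc_eq_plus1 Suc_le_mono add_lessD1 le_SucI)
    qed
  qed
  have bonly: "z = b" if "(b, z) \<in> frel F'" for z
  proof -
    have "{b, z} \<in> F" "{b, z} \<noteq> e" using that by (auto simp: F'_def frel_iff)
    then obtain m where m: "m \<le> k" "m + 1 < l" "{b, z} = {P ! m, P ! (m + 1)}"
      using Fedge'[OF k1] by (auto simp: b_def)
    then have "b = P ! m \<or> b = P ! (m + 1)" by (metis doubleton_eq_iff)
    then have "k + 1 = m \<or> k + 1 = m + 1" using Pidx[OF k1] m(2) by (auto simp: b_def)
    then have "m = k" using m(1) by simp
    then have "{b, z} = e" using m(3) by (simp add: e_def a_def b_def insert_commute)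
    then show ?thesis using \<open>{b, z} \<noteq> e\<close> by simp
  qed
  have W'b: "wset V F' b = {b}"
  proof
    show "wset V F' b \<subseteq> {b}"
    proof
      fix y assume "y \<in> wset V F' b"
      then have "(b, y) \<in> (frel F')\<^sup>*" by (simp add: wset_def)
      then show "y \<in> {b}"
      proof (induction rule: rtrancl_induct)
        case base then show ?case by simp
      next
        case (step y z) then show ?case using bonly by simp
      qed
    qed
    show "{b} \<subseteq> wset V F' b" using wset_self[OF bV] by simp
  qed
  define Xa where "Xa = wset V F' a"
  have Xa_idx: "\<exists>j\<le>k. j < l \<and> y = P ! j" if "y \<in> Xa" for y
  proof -
    have "(a, y) \<in> (frel F')\<^sup>*" using that by (simp add: wset_def Xa_def)
    then show ?thesis
    proof (induction rule: rtrancl_induct)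
      case base then show ?case using kl by (auto simp: a_def)
    next
      case (step y z)
      then obtain j where j: "j \<le> k" "j < l" "y = P ! j" by blast
      have "{P ! j, z} \<in> F" "{P ! j, z} \<noteq> e" using step(2) j by (auto simp: frel_iff F'_def)
      then obtain m where m: "m \<le> k" "m + 1 < l" "{P ! j, z} = {P ! m, P ! (m + 1)}" using Fedge'[OF j(2)] by blast
      have "m \<noteq> k" using m(3) \<open>{P ! j, z} \<noteq> e\<close> by (auto simp: e_def a_def b_def)
      then have mk: "m + 1 \<le> k" using m(1) by simp
      have "z = P ! m \<or> z = P ! (m + 1)" using m(3) by (metis doubleton_eq_iff)
      then show ?case using m mk by (metis add_lessD1 le_SucI Suc_eq_plus1 le_trans)
    qed
  qed
  have bXa: "b \<notin> Xa"
  proof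
    assume "b \<in> Xa"
    then obtain j where j: "j \<le> k" "j < l" "b = P ! j" using Xa_idx by blast
    then have "P ! (k + 1) = P ! j" by (simp add: b_def)
    then have "k + 1 = j" by (rule Pidx[OF k1 j(2)])
    then show False using j(1) by simp
  qed
  have aXa: "a \<in> Xa" using wset_self[OF aV] by (simp add: Xa_def)
  define X where "X = W b"
  have bX: "b \<in> X" using wset_self[OF bV] by (simp add: X_def)
  have "(b, a) \<in> frel F" using eF' by (simp add: frel_iff e_def insert_commute)
  then have aX: "a \<in> X" using aV by (simp add: X_def wset_def)
  have WaX: "W a = X" using wset_eq[OF aX[unfolded X_def]] by (simp add: X_def)
  have Xeq: "X = insert b Xa"
  proof
    show "insert b Xa \<subseteq> X"
    proof -
      have "Xa \<subseteq> W a" using frel_mono[of F' F] F'F by (auto simp: Xa_def wset_def)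
      then show ?thesis using bX WaX by blast
    qed
    show "X \<subseteq> insert b Xa"
    proof
      fix y assume "y \<in> X"
      then have "(a, y) \<in> (frel F)\<^sup>*" using WaX by (auto simp: wset_def)
      then show "y \<in> insert b Xa"
      proof (induction rule: rtrancl_induct)
        case base then show ?case using aXa by simp
      next
        case (step y z)
        have az: "(a, z) \<in> (frel F)\<^sup>*" using step(1,2) by (rule rtrancl_into_rtrancl)
        have zV: "z \<in> V" by (rule frel_V[OF gr FE az aV])
        show ?case
        proof (cases "{y, z} = e")
          case True
          then have "z \<in> {a, b}" by (auto simp: e_def doubleton_eq_iff)
          then show ?thesis using aXa by blast
        next
          case False
          then have yz: "(y, z) \<in> frel F'" using step(2) by (simp add: frel_iff F'_def)
          from step(3) show ?thesis
          proof
            assume "y = b" then show ?thesis using bonly yz by simp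
          next
            assume "y \<in> Xa"
            then have "(a, y) \<in> (frel F')\<^sup>*" by (simp add: Xa_def wset_def)
            then have "(a, z) \<in> (frel F')\<^sup>*" using yz by (rule rtrancl_into_rtrancl)
            then show ?thesis using zV by (simp add: Xa_def wset_def)
          qed
        qed
      qed
    qed
  qed
  have Wsame: "wset V F' x = W x" if xV: "x \<in> V" and nX: "W x \<noteq> X" for x
  proof
    show "wset V F' x \<subseteq> W x" using frel_mono[of F' F] F'F by (auto simp: wset_def)
    show "W x \<subseteq> wset V F' x"
    proof
      fix y assume "y \<in> W x"
      then have xy: "(x, y) \<in> (frel F)\<^sup>*" and yV: "y \<in> V" by (simp_all add: wset_def)
      from xy have "(x, y) \<in> (frel F')\<^sup>*"
      proof (induction rule: rtrancl_induct)
        case base then show ?case by simp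
      next
        case (step y z)
        show ?case
        proof (cases "{y, z} = e")
          case True
          then have "y \<in> {a, b}" by (auto simp: e_def doubleton_eq_iff)
          then have yX: "y \<in> X" using aX bX by blast
          have yV: "y \<in> V" by (rule frel_V[OF gr FE step(1) xV])
          have "y \<in> W x" using step(1) yV by (simp add: wset_def)
          then have "W y = W x" by (rule wset_eq)
          moreover have "W y = X" using wset_eq[OF yX[unfolded X_def]] by (simp add: X_def)
          ultimately show ?thesis using nX by simp
        next
          case False
          then have "(y, z) \<in> frel F'" using step(2) by (simp add: frel_iff F'_def)
          then show ?thesis using step(3) by simp
        qed
      qed
      then show "y \<in> wset V F' x" using yV by (simp add: wset_def)
    qed
  qed
  have XWT: "X \<in> WT" using W_in_WT[OF bV] by (simp add: X_def)
  have XaX: "Xa \<noteq> X" using bXa bX by blast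
  have bsX: "{b} \<noteq> X" using aX ab by blast
  have Xab: "Xa \<noteq> {b}" using aXa ab by blast
  define WT' where "WT' = witness V F'"
  have WT'eq: "WT' = insert {b} (insert Xa (WT - {X}))"
  proof
    show "WT' \<subseteq> insert {b} (insert Xa (WT - {X}))"
    proof
      fix D assume "D \<in> WT'"
      then obtain x where xV: "x \<in> V" and D: "D = wset V F' x" by (auto simp: WT'_def witness_eq)
      consider "x = b" | "x \<in> X" "x \<noteq> b" | "x \<notin> X" by blast
      then show "D \<in> insert {b} (insert Xa (WT - {X}))"
      proof cases
        case 1 then show ?thesis using D W'b by simp
      next
        case 2
        then have "x \<in> Xa" using Xeq by blast
        then have "wset V F' x = Xa" unfolding Xa_def by (rule wset_eq)
        then show ?thesis using D by simp
      next
        case 3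
        have "x \<in> W x" by (rule wset_self[OF xV])
        then have "W x \<noteq> X" using 3 by blast
        then have "D = W x" using D Wsame[OF xV] by simp
        then show ?thesis using W_in_WT[OF xV] \<open>W x \<noteq> X\<close> by simp
      qed
    qed
    show "insert {b} (insert Xa (WT - {X})) \<subseteq> WT'"
    proof
      fix D assume D: "D \<in> insert {b} (insert Xa (WT - {X}))"
      have b': "{b} \<in> WT'" using W'b bV by (auto simp: WT'_def witness_eq)
      have a': "Xa \<in> WT'" using aV by (auto simp: WT'_def witness_eq Xa_def)
      show "D \<in> WT'"
      proof (cases "D \<in> WT - {X}")
        case True
        then obtain x where xV: "x \<in> V" and Dx: "D = W x" by (auto simp: witness_eq)
        then have "wset V F' x = D" using Wsame[OF xV] True by simp
        then show ?thesis using xV by (auto simp: WT'_def witness_eq)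
      next
        case False then show ?thesis using D b' a' by blast
      qed
    qed
  qed
  obtain zl where zl: "zl \<in> Z" "zl \<in> nbhd E (P ! (l - 1))" using TZ by blast
  define c where "c = (if k + 2 < l then P ! (k + 2) else zl)"
  have XP: "X \<subseteq> set P" using WP_sub[OF Pnth[OF k1]] by (simp add: X_def b_def)
  have cV: "c \<in> V" and cX: "c \<notin> X"
  proof -
    show "c \<in> V" using SP zl ZV by (auto simp: c_def)
    show "c \<notin> X"
    proof (cases "k + 2 < l")
      case True
      show ?thesis
      proof
        assume "c \<in> X"
        then obtain j where j: "j \<le> k + 1" "j < l" "c = P ! j" using Xidx by (auto simp: X_def)
        then have "P ! (k + 2) = P ! j" using True by (simp add: c_def)
        then have "k + 2 = j" by (rule Pidx[OF True j(2)])
        then show False using j(1) by simp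
      qed
    next
      case False then show ?thesis using XP zl PZ by (auto simp: c_def)
    qed
  qed
  define N2 where "N2 = W c"
  have cN2: "c \<in> N2" using wset_self[OF cV] by (simp add: N2_def)
  have N2X: "N2 \<noteq> X" using cN2 cX by blast
  have N2WT: "N2 \<in> WT" using W_in_WT[OF cV] by (simp add: N2_def)
  have W'c: "wset V F' c = N2" using Wsame[OF cV] N2X by (simp add: N2_def)
  have ebc: "{b, c} \<in> E"
  proof (cases "k + 2 < l")
    case True then show ?thesis using ED[of "k + 1"] by (simp add: b_def c_def)
  next
    case False
    then have "k + 1 = l - 1" using k1 by simp
    then show ?thesis using False zl(2) by (simp add: b_def c_def nbhd_iff insert_commute)
  qed
  have nb_b: "y = a \<or> (y \<in> V \<and> W y = N2)" if y: "y \<in> nbhd E b" for y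
  proof (cases "k + 2 < l")
    case True
    then have "nbhd E b = {P ! k, P ! (k + 2)}" using IN[of "k + 1"] by (simp add: b_def)
    then have "y = a \<or> y = c" using y True by (simp add: a_def c_def)
    then show ?thesis using cV by (auto simp: N2_def)
  next
    case False
    then have kl1: "k + 1 = l - 1" using k1 by simp
    then have "k = l - 2" by simp
    have yb: "y \<in> nbhd E (P ! (l - 1))" using y kl1 by (simp add: b_def)
    have "P ! (l - 2) = a" using \<open>k = l - 2\<close> by (simp add: a_def)
    then have "y \<in> Z \<union> {a}" using LA yb by blast
    then show ?thesis
    proof
      assume yZ: "y \<in> Z"
      have "y \<in> nbhd E (P ! (l - 1))" using y kl1 by (simp add: b_def)
      then have "W y = W zl" using side_last[OF yZ _ zl(1) zl(2)] by blast
      then show ?thesis using yZ ZV False by (auto simp: N2_def c_def)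
    qed simp
  qed
  have noedge: "{x, y} \<notin> E" if x: "x \<in> Xa" and y: "y \<in> N2" for x y
  proof
    assume exy: "{x, y} \<in> E"
    obtain j where j: "j \<le> k" "j < l" "x = P ! j" using Xa_idx[OF x] by blast
    show False
    proof (cases "k + 2 < l")
      case True
      have cc: "c = P ! (k + 2)" using True by (simp add: c_def)
      have "y = c"
      proof -
        have "(c, y) \<in> (frel F)\<^sup>*" using y by (simp add: N2_def wset_def)
        then show ?thesis
        proof (induction rule: rtrancl_induct)
          case base then show ?case by simp
        next
          case (step y z)
          then have "{P ! (k + 2), z} \<in> F" by (simp add: frel_iff cc)
          then obtain m where m: "m \<le> k" "m + 1 < l" "{P ! (k + 2), z} = {P ! m, P ! (m + 1)}"
            using Fedge'[OF True] by blast
          then have "P ! (k + 2) = P ! m \<or> P ! (k + 2) = P ! (m + 1)" by (metis doubleton_eq_iff)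
          then have "k + 2 = m \<or> k + 2 = m + 1" using Pidx[OF True] m(2) by auto
          then show ?case using m(1) by simp
        qed
      qed
      then have "P ! (k + 2) \<in> nbhd E (P ! j)" using exy j cc by (simp add: nbhd_iff')
      then have "k + 2 = j + 1 \<or> j = k + 2 + 1" using nb_in[OF j(2) True] by blast
      then show False using j(1) by simp
    next
      case False
      have "y \<in> Z" using y WZ_sub[OF zl(1)] False by (auto simp: N2_def c_def)
      then have ynP: "y \<notin> set P" using PZ by blast
      have "y \<in> nbhd E (P ! j)" using exy j by (simp add: nbhd_iff')
      then have "(j = 0 \<and> y \<in> Y) \<or> (j = l - 1 \<and> y \<in> Z)" using nb_out[OF j(2) _ ynP] by blast
      then show False using YZ \<open>y \<in> Z\<close> j(1) k1 by auto
    qed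
  qed
  define ET' where "ET' = contr_edges V E F'"
  have gr': "graph WT' ET'" unfolding WT'_def ET'_def by (rule graph_contr[OF finV])
  have sV: "{b} \<in> WT'" using WT'eq by simp
  have XaV: "Xa \<in> WT'" using WT'eq by simp
  have N2V: "N2 \<in> WT'" using WT'eq N2WT N2X by simp
  have N2b: "N2 \<noteq> {b}"
  proof
    assume "N2 = {b}"
    then have "b \<in> W c" by (simp add: N2_def)
    then have "W b = W c" by (rule wset_eq)
    then show False using N2X by (simp add: N2_def X_def)
  qed
  have pq: "Xa \<noteq> N2"
  proof
    assume "Xa = N2"
    then have "a \<in> W c" using aXa by (simp add: N2_def)
    then have "W a = W c" by (rule wset_eq)
    then show False using N2X WaX by (simp add: N2_def)
  qed
  have nbs: "nbhd ET' {b} = {Xa, N2}"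
  proof
    show "nbhd ET' {b} \<subseteq> {Xa, N2}"
    proof
      fix D assume "D \<in> nbhd ET' {b}"
      then have "{D, {b}} \<in> ET'" by (simp add: nbhd_iff)
      then have D: "D \<in> WT'" "\<exists>d\<in>D. \<exists>b'\<in>{b}. {d, b'} \<in> E"
        unfolding ET'_def WT'_def contr_edges_iff by blast+
      then obtain d where d: "d \<in> D" "{d, b} \<in> E" by blast
      have DW: "D = wset V F' d" using witness_mem[OF D(1)[unfolded WT'_def] d(1)] .
      have "d \<in> nbhd E b" using d(2) by (simp add: nbhd_iff)
      then have "d = a \<or> (d \<in> V \<and> W d = N2)" by (rule nb_b)
      then show "D \<in> {Xa, N2}"
      proof
        assume "d = a" then show ?thesis using DW by (simp add: Xa_def)
      next
        assume h: "d \<in> V \<and> W d = N2"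
        then have "wset V F' d = N2" using Wsame[of d] N2X by simp
        then show ?thesis using DW by simp
      qed
    qed
    show "{Xa, N2} \<subseteq> nbhd ET' {b}"
    proof -
      have "{a, b} \<in> E" using eF' FE by (auto simp: e_def)
      then have "{Xa, {b}} \<in> ET'" unfolding ET'_def contr_edges_iff
        using XaV sV Xab aXa unfolding WT'_def by blast
      moreover have "{N2, {b}} \<in> ET'" unfolding ET'_def contr_edges_iff
        using N2V sV N2b cN2 ebc unfolding WT'_def by (auto simp: insert_commute)
      ultimately show ?thesis by (simp add: nbhd_iff)
    qed
  qed
  have npq: "{Xa, N2} \<notin> ET'"
  proof
    assume "{Xa, N2} \<in> ET'"
    then obtain x y where "x \<in> Xa" "y \<in> N2" "{x, y} \<in> E"
      unfolding ET'_def contr_edges_iff by blast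
    then show False using noedge by blast
  qed
  define h where "h = (\<lambda>D. if D = Xa then X else D)"
  have Vs: "WT' - {{b}} \<subseteq> insert Xa (WT - {X})" using WT'eq by blast
  have inj: "inj_on h (WT' - {{b}})"
  proof (rule inj_onI)
    fix D1 D2 assume D1: "D1 \<in> WT' - {{b}}" and D2: "D2 \<in> WT' - {{b}}" and eq: "h D1 = h D2"
    have D1': "D1 \<in> insert Xa (WT - {X})" and D2': "D2 \<in> insert Xa (WT - {X})" using D1 D2 Vs by blast+
    show "D1 = D2"
    proof (cases "D1 = Xa")
      case True
      then show ?thesis using eq D2' by (cases "D2 = Xa") (auto simp: h_def)
    next
      case False
      then show ?thesis using eq D1' by (cases "D2 = Xa") (auto simp: h_def)
    qed
  qed
  have hsub: "D \<subseteq> h D" for D using Xeq by (auto simp: h_def)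
  have hWT: "h D \<in> WT" if "D \<in> insert Xa (WT - {X})" for D using that XWT by (auto simp: h_def)
  have ed: "{h u, h v} \<in> ET" if uv: "{u, v} \<in> ET'" "u \<noteq> {b}" "v \<noteq> {b}" for u v
  proof -
    have u: "u \<in> WT'" and v: "v \<in> WT'" and neq: "u \<noteq> v" and ex: "\<exists>x\<in>u. \<exists>y\<in>v. {x, y} \<in> E"
      using uv(1) unfolding ET'_def WT'_def contr_edges_iff by blast+
    have u': "u \<in> WT' - {{b}}" and v': "v \<in> WT' - {{b}}" using u v uv by blast+
    have "h u \<noteq> h v" using inj neq u' v' by (meson inj_on_contraD)
    moreover have "h u \<in> WT" "h v \<in> WT" using hWT Vs u' v' by blast+
    moreover have "\<exists>x\<in>h u. \<exists>y\<in>h v. {x, y} \<in> E" using ex hsub by blast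
    ultimately show ?thesis unfolding contr_edges_iff by blast
  qed
  have ehpq: "{h Xa, h N2} \<in> ET"
  proof -
    have "h Xa = X" "h N2 = N2" using pq by (simp_all add: h_def)
    moreover have "{X, N2} \<in> ET" unfolding contr_edges_iff
      using XWT N2WT N2X bX cN2 ebc by blast
    ultimately show ?thesis by simp
  qed
  have "cyc_prop ET'"
    by (rule cyc_prop_sub[OF gr' sV nbs pq npq inj _ ehpq cp]) (rule ed)
  moreover have "connected_on ET' WT'" unfolding ET'_def WT'_def by (rule connected_contr[OF Gconn])
  ultimately have "cactus WT' ET'" using gr' by (simp add: cactus_iff)
  then show False using MIN F'F by (simp add: WT'_def ET'_def)
qed

end

lemma mono_disjoint:
  assumes MY: "mono_component V E f Y" and MZ: "mono_component V E f Z" and ne: "Y \<noteq> Z"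
  shows "Y \<inter> Z = {}"
proof (rule ccontr)
  assume "Y \<inter> Z \<noteq> {}"
  then obtain x where xY: "x \<in> Y" and xZ: "x \<in> Z" by blast
  have YV: "Y \<subseteq> V" and cY: "connected_on E Y" and mY: "monochromatic f Y"
    and mxY: "\<forall>S'. Y \<subset> S' \<and> S' \<subseteq> V \<and> connected_on E S' \<longrightarrow> \<not> monochromatic f S'"
    using MY unfolding mono_component_def by blast+
  have ZV: "Z \<subseteq> V" and cZ: "connected_on E Z" and mZ: "monochromatic f Z"
    and mxZ: "\<forall>S'. Z \<subset> S' \<and> S' \<subseteq> V \<and> connected_on E S' \<longrightarrow> \<not> monochromatic f S'"
    using MZ unfolding mono_component_def by blast+
  let ?U = "Y \<union> Z"
  have UV: "?U \<subseteq> V" using YV ZV by blast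
  have tox: "(a, x) \<in> (edge_rel E ?U)\<^sup>*" if "a \<in> ?U" for a
  proof (cases "a \<in> Y")
    case True
    then have "(a, x) \<in> (edge_rel E Y)\<^sup>*" using cY xY by (simp add: connected_on_def)
    then show ?thesis by (rule edge_rel_rtrancl_mono[rotated]) blast
  next
    case False
    then have "a \<in> Z" using that by blast
    then have "(a, x) \<in> (edge_rel E Z)\<^sup>*" using cZ xZ by (simp add: connected_on_def)
    then show ?thesis by (rule edge_rel_rtrancl_mono[rotated]) blast
  qed
  have cU: "connected_on E ?U"
    unfolding connected_on_def
  proof (intro conjI ballI)
    show "?U \<noteq> {}" using xY by blast
  next
    fix a b assume "a \<in> ?U" "b \<in> ?U"
    then have "(a, x) \<in> (edge_rel E ?U)\<^sup>*" "(b, x) \<in> (edge_rel E ?U)\<^sup>*" using tox by blast+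
    then show "(a, b) \<in> (edge_rel E ?U)\<^sup>*" using edge_rel_rtrancl_sym rtrancl_trans by metis
  qed
  obtain cy where cy: "\<forall>y\<in>Y. f y = cy" using mY by (auto simp: monochromatic_def)
  obtain cz where cz: "\<forall>y\<in>Z. f y = cz" using mZ by (auto simp: monochromatic_def)
  have "cy = cz" using cy cz xY xZ by metis
  then have mU: "monochromatic f ?U" using cy cz unfolding monochromatic_def by auto
  have "\<not> Y \<subset> ?U" using mxY UV cU mU by blast
  then have "Z \<subseteq> Y" by blast
  moreover have "\<not> Z \<subset> ?U" using mxZ UV cU mU by blast
  then have "Y \<subseteq> Z" by blast
  ultimately show False using ne by blast
qed

lemma cable_rev:
  assumes "cable_path V E P"
  shows "cable_path V E (rev P)"
proof -
  let ?n = "length P"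
  have ip: "is_path V E P" and cb: "\<forall>i. 0 < i \<and> i + 1 < ?n \<longrightarrow> nbhd E (P ! i) = {P ! (i - 1), P ! (i + 1)}"
    using assms unfolding cable_path_def by blast+
  have ne: "P \<noteq> []" and d: "distinct P" and s: "set P \<subseteq> V"
    and ed: "\<forall>i. i + 1 < ?n \<longrightarrow> {P ! i, P ! (i + 1)} \<in> E"
    using ip unfolding is_path_def by blast+
  have revn: "rev P ! i = P ! (?n - 1 - i)" if "i < ?n" for i using that by (simp add: rev_nth)
  have ED': "{rev P ! i, rev P ! (i + 1)} \<in> E" if i: "i + 1 < ?n" for i
  proof -
    define j where "j = ?n - 2 - i"
    have j1: "j + 1 < ?n" using i unfolding j_def by arith
    have a1: "?n - 1 - i = j + 1" "?n - 1 - (i + 1) = j" using i unfolding j_def by arith+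
    have il: "i < ?n" "i + 1 < ?n" using i by arith+
    have "rev P ! i = P ! (j + 1)" using revn[OF il(1)] a1(1) by (simp only:)
    moreover have "rev P ! (i + 1) = P ! j" using revn[OF il(2)] a1(2) by (simp only:)
    ultimately show ?thesis using ed j1 by (simp add: insert_commute)
  qed
  have IN': "nbhd E (rev P ! i) = {rev P ! (i - 1), rev P ! (i + 1)}" if i: "0 < i" "i + 1 < ?n" for i
  proof -
    define m where "m = ?n - 1 - i"
    have m: "0 < m" "m + 1 < ?n" using i unfolding m_def by arith+
    have a1: "?n - 1 - (i - 1) = m + 1" "?n - 1 - (i + 1) = m - 1" using i unfolding m_def by arith+
    have il: "i < ?n" "i - 1 < ?n" "i + 1 < ?n" using i by arith+
    have "rev P ! i = P ! m" using revn[OF il(1)] by (simp only: m_def)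
    moreover have "rev P ! (i - 1) = P ! (m + 1)" using revn[OF il(2)] a1(1) by (simp only:)
    moreover have "rev P ! (i + 1) = P ! (m - 1)" using revn[OF il(3)] a1(2) by (simp only:)
    ultimately show ?thesis using cb m by (simp add: insert_commute)
  qed
  show ?thesis unfolding cable_path_def is_path_def
    using ne d s ED' IN' by simp
qed

lemma max_cable_rev:
  assumes "max_cable_path V E P"
  shows "max_cable_path V E (rev P)"
proof -
  have c: "cable_path V E P" and m: "\<not> (\<exists>qs. cable_path V E qs \<and> length qs > length P \<and> (sublist P qs \<or> sublist (rev P) qs))"
    using assms unfolding max_cable_path_def by blast+
  show ?thesis unfolding max_cable_path_def using cable_rev[OF c] m by auto
qed

lemma two_nbrs:
  assumes G2: "two_connected V E" and mc: "max_cable_path V E P" and LP: "length P \<ge> 2"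
    and HD: "nbhd E (P ! 0) \<subseteq> Y \<union> {P ! 1}" and PY: "set P \<inter> Y = {}" and YV: "Y \<subseteq> V"
  shows "\<exists>y1 y2. y1 \<noteq> y2 \<and> y1 \<in> Y \<and> y2 \<in> Y \<and> y1 \<in> nbhd E (P ! 0) \<and> y2 \<in> nbhd E (P ! 0)"
proof -
  have cb: "cable_path V E P" and mx: "\<not> (\<exists>qs. cable_path V E qs \<and> length qs > length P \<and> (sublist P qs \<or> sublist (rev P) qs))"
    using mc unfolding max_cable_path_def by blast+
  have ip: "is_path V E P" and cbi: "\<forall>i. 0 < i \<and> i + 1 < length P \<longrightarrow> nbhd E (P ! i) = {P ! (i - 1), P ! (i + 1)}"
    using cb unfolding cable_path_def by blast+
  have ne: "P \<noteq> []" and d: "distinct P" and s: "set P \<subseteq> V"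
    and ed: "\<forall>i. i + 1 < length P \<longrightarrow> {P ! i, P ! (i + 1)} \<in> E"
    using ip unfolding is_path_def by blast+
  have gr: "graph V E" and cardV: "card V \<ge> 3" and cut: "\<forall>v\<in>V. connected_on E (V - {v})"
    using G2 unfolding two_connected_def by blast+
  have l0: "0 < length P" and l1: "1 < length P" using LP by arith+
  have P0: "P ! 0 \<in> set P" and P1: "P ! 1 \<in> set P" using l0 l1 by (simp_all del: One_nat_def)
  have P0V: "P ! 0 \<in> V" and P1V: "P ! 1 \<in> V" using P0 P1 s by blast+
  have P01: "P ! 0 \<noteq> P ! 1" using d l0 l1 nth_eq_iff_index_eq[OF d l0 l1] by simp
  have e01: "{P ! 0, P ! 1} \<in> E" using ed l1 by simp
  then have P1n: "P ! 1 \<in> nbhd E (P ! 0)" by (simp add: nbhd_iff')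
  obtain w where w: "w \<in> V" "w \<noteq> P ! 0" "w \<noteq> P ! 1"
  proof (rule ccontr)
    assume "\<not> thesis"
    then have "V \<subseteq> {P ! 0, P ! 1}" using that by blast
    then have "card V \<le> card {P ! 0, P ! 1}" by (rule card_mono[rotated]) simp
    also have "\<dots> \<le> 2" by (simp add: card_insert_le_m1)
    finally show False using cardV by simp
  qed
  have "connected_on E (V - {P ! 1})" using cut P1V by blast
  then have "(P ! 0, w) \<in> (edge_rel E (V - {P ! 1}))\<^sup>*" using P0V P01 w by (simp add: connected_on_def)
  then obtain z where "(P ! 0, z) \<in> edge_rel E (V - {P ! 1})" using w(2) by (metis converse_rtranclE)
  then have z: "{P ! 0, z} \<in> E" "z \<noteq> P ! 1" by (simp_all add: edge_rel_def)
  then have zn: "z \<in> nbhd E (P ! 0)" by (simp add: nbhd_iff')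
  then have zY: "z \<in> Y" using HD z(2) by blast
  show ?thesis
  proof (rule ccontr)
    assume nt: "\<not> ?thesis"
    have uniq: "y = z" if "y \<in> Y" "y \<in> nbhd E (P ! 0)" for y using nt zY zn that by blast
    have nb: "nbhd E (P ! 0) = {z, P ! 1}"
    proof
      show "nbhd E (P ! 0) \<subseteq> {z, P ! 1}" using HD uniq by blast
      show "{z, P ! 1} \<subseteq> nbhd E (P ! 0)" using zn P1n by blast
    qed
    let ?q = "z # P"
    have zP: "z \<notin> set P" using zY PY by blast
    have zV: "z \<in> V" using zY YV by blast
    have "is_path V E ?q"
      unfolding is_path_def
    proof (intro conjI allI impI)
      show "?q \<noteq> []" by simp
      show "distinct ?q" using d zP by simp
      show "set ?q \<subseteq> V" using s zV by simp
    next
      fix i assume i: "i + 1 < length ?q"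
      show "{?q ! i, ?q ! (i + 1)} \<in> E"
      proof (cases i)
        case 0 then show ?thesis using z(1) by (simp add: insert_commute)
      next
        case (Suc i') then show ?thesis using ed i by simp
      qed
    qed
    moreover have "\<forall>i. 0 < i \<and> i + 1 < length ?q \<longrightarrow> nbhd E (?q ! i) = {?q ! (i - 1), ?q ! (i + 1)}"
    proof (intro allI impI)
      fix i assume i: "0 < i \<and> i + 1 < length ?q"
      then obtain i' where i': "i = Suc i'" by (cases i) auto
      show "nbhd E (?q ! i) = {?q ! (i - 1), ?q ! (i + 1)}"
      proof (cases i')
        case 0 then show ?thesis using i' nb by simp
      next
        case (Suc i'')
        have "0 < i' \<and> i' + 1 < length P" using i i' Suc by simp
        then have "nbhd E (P ! i') = {P ! (i' - 1), P ! (i' + 1)}" using cbi by blast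
        then show ?thesis using i' Suc by simp
      qed
    qed
    ultimately have "cable_path V E ?q" unfolding cable_path_def by blast
    moreover have "length ?q > length P" by simp
    moreover have "sublist P ?q" using sublist_append_leftI[of P "[z]"] by simp
    ultimately show False using mx by blast
  qed
qed

theorem lemma4p3:
  fixes V :: "'a set" and E F :: "'a set set" and f :: "'a \<Rightarrow> nat"
    and Y Z :: "'a set" and P :: "'a list"
  assumes "two_connected V E"
    and "minimal_cactus_contraction V E F"
    and "compatible V E F f"
    and "mono_component V E f Y" and "mono_component V E f Z" and "Y \<noteq> Z"
    and "length P \<ge> 2"
    and "component (V - (Y \<union> Z)) E (set P)"
    and "max_cable_path V E P"
    and "nbhd E (hd P) \<subseteq> Y \<union> {P ! 1}"
    and "nbhd E (last P) \<subseteq> Z \<union> {P ! (length P - 2)}"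
  shows "(\<forall>v\<in>set P. {v} \<in> witness V F)
    \<and> (\<exists>W\<in>witness V F. card W \<ge> 2 \<and> W \<subseteq> Y)
    \<and> (\<exists>W\<in>witness V F. card W \<ge> 2 \<and> W \<subseteq> Z)"
proof -
  note G2 = assms(1) and CO = assms(3) and MY = assms(4) and MZ = assms(5) and LP = assms(7)
  have FE: "F \<subseteq> E" and cact: "cactus (witness V F) (contr_edges V E F)"
    and MIN: "\<forall>F'. F' \<subset> F \<longrightarrow> \<not> cactus (witness V F') (contr_edges V E F')"
    using assms(2) unfolding minimal_cactus_contraction_def by blast+
  have YZ: "Y \<inter> Z = {}" by (rule mono_disjoint[OF MY MZ assms(6)])
  have PYZ: "set P \<subseteq> V - (Y \<union> Z)" using assms(8) unfolding component_def by blast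
  have cb: "cable_path V E P" using assms(9) unfolding max_cable_path_def by blast
  have ip: "is_path V E P" and cbi: "\<forall>i. 0 < i \<and> i + 1 < length P \<longrightarrow> nbhd E (P ! i) = {P ! (i - 1), P ! (i + 1)}"
    using cb unfolding cable_path_def by blast+
  have ne: "P \<noteq> []" and d: "distinct P" and s: "set P \<subseteq> V"
    and ed: "\<forall>i. i + 1 < length P \<longrightarrow> {P ! i, P ! (i + 1)} \<in> E"
    using ip unfolding is_path_def by blast+
  have YV: "Y \<subseteq> V" using MY unfolding mono_component_def by blast
  have ZV: "Z \<subseteq> V" using MZ unfolding mono_component_def by blast
  have PY: "set P \<inter> Y = {}" and PZ: "set P \<inter> Z = {}" using PYZ by blast+
  have hdP: "hd P = P ! 0" using ne by (simp add: hd_conv_nth)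
  have lastP: "last P = P ! (length P - 1)" using ne by (simp add: last_conv_nth)
  have HD: "nbhd E (P ! 0) \<subseteq> Y \<union> {P ! 1}" using assms(10) hdP by simp
  have LA: "nbhd E (P ! (length P - 1)) \<subseteq> Z \<union> {P ! (length P - 2)}" using assms(11) lastP by simp
  have TY: "\<exists>y1 y2. y1 \<noteq> y2 \<and> y1 \<in> Y \<and> y2 \<in> Y \<and> y1 \<in> nbhd E (P ! 0) \<and> y2 \<in> nbhd E (P ! 0)"
    by (rule two_nbrs[OF G2 assms(9) LP HD PY YV])
  have TZ: "\<exists>y1 y2. y1 \<noteq> y2 \<and> y1 \<in> Z \<and> y2 \<in> Z \<and> y1 \<in> nbhd E (P ! (length P - 1)) \<and> y2 \<in> nbhd E (P ! (length P - 1))"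
  proof -
    have l0: "0 < length P" using LP by arith
    have r0: "rev P ! 0 = P ! (length P - 1)" using l0 by (simp add: rev_nth)
    have r1: "rev P ! 1 = P ! (length P - 2)"
    proof -
      have "1 < length P" "length P - Suc 1 = length P - 2" using LP by arith+
      then show ?thesis by (simp add: rev_nth del: One_nat_def)
    qed
    have "nbhd E (rev P ! 0) \<subseteq> Z \<union> {rev P ! 1}" using LA r0 r1 by simp
    moreover have "length (rev P) \<ge> 2" using LP by simp
    moreover have "set (rev P) \<inter> Z = {}" using PZ by simp
    ultimately have "\<exists>y1 y2. y1 \<noteq> y2 \<and> y1 \<in> Z \<and> y2 \<in> Z \<and> y1 \<in> nbhd E (rev P ! 0) \<and> y2 \<in> nbhd E (rev P ! 0)"
      using two_nbrs[OF G2 max_cable_rev[OF assms(9)]] ZV by blast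
    then show ?thesis using r0 by simp
  qed
  have S: "setting V E F f Y Z P"
    apply (rule setting.intro)
    subgoal by (rule G2)
    subgoal by (rule FE)
    subgoal by (rule cact)
    subgoal by (rule CO)
    subgoal by (rule MY)
    subgoal by (rule MZ)
    subgoal by (rule YZ)
    subgoal by (rule LP)
    subgoal by (rule d)
    subgoal by (rule s)
    subgoal by (rule PY)
    subgoal by (rule PZ)
    subgoal using ed by blast
    subgoal using cbi by blast
    subgoal by (rule HD)
    subgoal by (rule LA)
    subgoal by (rule TY)
    subgoal by (rule TZ)
    done
  interpret setting_min V E F f Y Z P
    by (rule setting_min.intro[OF S]) (unfold_locales, rule MIN)
  show ?thesis using claim1 claim2_Y claim2_Z by blast
qed

end
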